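(* Let $R$ be a commutative ring, $A=\mathrm{S}_4(R)$ and $M=\mathrm{M}_3(R)$. Then $H^n(A,M/A)$ is a free $R$-module for all $n\ge0$, with $\mathrm{rank}_RH^0(A,M/A)=4$ and $\mathrm{rank}_RH^n(A,M/A)=3\cdot2^n$ for $n\ge1$.
   Context: $\mathrm{S}_4(R)=\left\{\begin{pmatrix}a&b&c\\0&a&0\\0&0&a\end{pmatrix}\mid a,b,c\in R\right\}\subseteq\mathrm{M}_3(R)$. $H^n$ is Hochschild cohomology, with $M/A$ an $A$-bimodule via matrix multiplication. *)

theory Defs
  imports "Jordan_Normal_Form.Matrix"
begin

definition M3 :: "'r::comm_ring_1 mat set" where
  "M3 = carrier_mat 3 3"

definition S4_mat :: "'r::comm_ring_1 \<Rightarrow> 'r \<Rightarrow> 'r \<Rightarrow> 'r mat" where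
  "S4_mat a b c = mat 3 3 (\<lambda>(i,j). if i = j then a
                                    else if i = 0 \<and> j = 1 then b
                                    else if i = 0 \<and> j = 2 then c
                                    else 0)"

definition S4 :: "'r::comm_ring_1 mat set" where
  "S4 = {S4_mat a b c | a b c. True}"

text \<open>A map A^n \<rightarrow> M/A is represented by a function to M (a choice of
  representatives); two such functions represent the same map iff they are
  pointwise congruent modulo A. All conditions below are stated modulo A.\<close>

definition tuples :: "'a set \<Rightarrow> nat \<Rightarrow> 'a list set" where
  "tuples A n = {xs. length xs = n \<and> set xs \<subseteq> A}"

definition cochain :: "'r::comm_ring_1 mat set \<Rightarrow> nat \<Rightarrow> ('r mat list \<Rightarrow> 'r mat) \<Rightarrow> bool" where
  "cochain A n f \<longleftrightarrow>
     (\<forall>xs\<in>tuples A n. f xs \<in> M3) \<and>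
     (\<forall>xs\<in>tuples A n. \<forall>i<n. \<forall>x\<in>A. \<forall>y\<in>A. \<forall>r s.
        f (xs[i := r \<cdot>\<^sub>m x + s \<cdot>\<^sub>m y]) - (r \<cdot>\<^sub>m f (xs[i := x]) + s \<cdot>\<^sub>m f (xs[i := y])) \<in> A)"

text \<open>Hochschild differential C^n \<rightarrow> C^(n+1), with xs = [x_1,...,x_(n+1)]:
  (df)(x_1..x_(n+1)) = x_1 f(x_2..x_(n+1)) + sum_(i=1..n) (-1)^i f(..,x_i x_(i+1),..)
                        + (-1)^(n+1) f(x_1..x_n) x_(n+1).\<close>
definition hdiff :: "nat \<Rightarrow> ('r::comm_ring_1 mat list \<Rightarrow> 'r mat) \<Rightarrow> 'r mat list \<Rightarrow> 'r mat" where
  "hdiff n f xs = mat 3 3 (\<lambda>(p,q).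
       ((xs ! 0) * f (drop 1 xs)) $$ (p,q)
     + (\<Sum>i<n. (-1) ^ (i+1) * (f (take i xs @ [xs ! i * xs ! (i+1)] @ drop (i+2) xs)) $$ (p,q))
     + (-1) ^ (n+1) * (f (take n xs) * xs ! n) $$ (p,q))"

definition cocycle :: "'r::comm_ring_1 mat set \<Rightarrow> nat \<Rightarrow> ('r mat list \<Rightarrow> 'r mat) \<Rightarrow> bool" where
  "cocycle A n f \<longleftrightarrow> cochain A n f \<and> (\<forall>xs\<in>tuples A (Suc n). hdiff n f xs \<in> A)"

definition coboundary :: "'r::comm_ring_1 mat set \<Rightarrow> nat \<Rightarrow> ('r mat list \<Rightarrow> 'r mat) \<Rightarrow> bool" where
  "coboundary A n f \<longleftrightarrow>
     (n = 0 \<and> f [] \<in> A) \<or>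
     (\<exists>m g. n = Suc m \<and> cochain A m g \<and> (\<forall>xs\<in>tuples A n. f xs - hdiff m g xs \<in> A))"

definition lincomb :: "nat \<Rightarrow> (nat \<Rightarrow> 'r::comm_ring_1) \<Rightarrow> (nat \<Rightarrow> 'r mat list \<Rightarrow> 'r mat) \<Rightarrow> 'r mat list \<Rightarrow> 'r mat" where
  "lincomb k r c xs = mat 3 3 (\<lambda>(p,q). \<Sum>l<k. r l * (c l xs) $$ (p,q))"

definition HH_free_of_rank :: "'r::comm_ring_1 mat set \<Rightarrow> nat \<Rightarrow> nat \<Rightarrow> bool" where
  "HH_free_of_rank A n k \<longleftrightarrow>
     (\<exists>c. (\<forall>l<k. cocycle A n (c l)) \<and>
          (\<forall>z. cocycle A n z \<longrightarrow> (\<exists>r. coboundary A n (\<lambda>xs. z xs - lincomb k r c xs))) \<and>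
          (\<forall>r. coboundary A n (lincomb k r c) \<longrightarrow> (\<forall>l<k. r l = 0)))"

end

theory Submission
  imports Defs
begin

lemma sum3: "(\<Sum>i::nat = 0..<3. f i) = f 0 + f 1 + (f 2::'a::comm_monoid_add)"
  by (simp add: eval_nat_numeral)

lemma mult3: 
  assumes "A \<in> carrier_mat 3 3" "B \<in> carrier_mat 3 3" "i < 3" "j < 3"
  shows "(A * B) $$ (i,j) = A$$(i,0)*B$$(0,j) + A$$(i,1)*B$$(1,j) + A$$(i,2)*B$$(2,j)"
  using assms by (simp add: scalar_prod_def sum3)

lemma less3_cases: "(i::nat) < 3 \<Longrightarrow> i = 0 \<or> i = 1 \<or> i = 2" by auto
lemma less6_cases: "(i::nat) < 6 \<Longrightarrow> i = 0 \<or> i = 1 \<or> i = 2 \<or> i = 3 \<or> i = 4 \<or> i = 5" by auto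

lemma S4_mat_carrier[simp]: "S4_mat a b c \<in> carrier_mat 3 3"
  by (simp add: S4_mat_def)

lemma S4_mat_idx[simp]:
  "S4_mat a b c $$ (0,0) = a" "S4_mat a b c $$ (1,1) = a" "S4_mat a b c $$ (2,2) = a"
  "S4_mat a b c $$ (0,1) = b" "S4_mat a b c $$ (0,2) = c"
  "S4_mat a b c $$ (1,0) = 0" "S4_mat a b c $$ (2,0) = 0" "S4_mat a b c $$ (1,2) = 0" "S4_mat a b c $$ (2,1) = 0"
  by (simp_all add: S4_mat_def)

lemma S4_mat_idx'[simp]:
  "S4_mat a b c $$ (Suc 0,Suc 0) = a"
  "S4_mat a b c $$ (0,Suc 0) = b" 
  "S4_mat a b c $$ (Suc 0,0) = 0" "S4_mat a b c $$ (Suc 0,2) = 0" "S4_mat a b c $$ (2,Suc 0) = 0"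
  by (simp_all add: S4_mat_def)

lemma S4_mat_dim[simp]: "dim_row (S4_mat a b c) = 3" "dim_col (S4_mat a b c) = 3"
  by (simp_all add: S4_mat_def)

lemma mat3_eqI:
  assumes "A \<in> carrier_mat 3 3" "B \<in> carrier_mat 3 3"
  "A$$(0,0) = B$$(0,0)" "A$$(0,1) = B$$(0,1)" "A$$(0,2) = B$$(0,2)"
  "A$$(1,0) = B$$(1,0)" "A$$(1,1) = B$$(1,1)" "A$$(1,2) = B$$(1,2)"
  "A$$(2,0) = B$$(2,0)" "A$$(2,1) = B$$(2,1)" "A$$(2,2) = B$$(2,2)"
  shows "A = B"
proof (rule eq_matI)
  fix i j assume "i < dim_row B" "j < dim_col B"
  then have "i < 3" "j < 3" using assms by auto
  then show "A $$ (i, j) = B $$ (i, j)" using assms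
    by (auto dest!: less3_cases)
qed (use assms in auto)

lemma mem_S4:
  "(m::'r::comm_ring_1 mat) \<in> S4 \<longleftrightarrow> (m \<in> carrier_mat 3 3 \<and> m$$(1,0) = 0 \<and> m$$(2,0) = 0 \<and> m$$(1,2) = 0 \<and> m$$(2,1) = 0
     \<and> m$$(1,1) = m$$(0,0) \<and> m$$(2,2) = m$$(0,0))"
proof
  assume "m \<in> S4"
  then obtain a b c where "m = S4_mat a b c" by (auto simp: S4_def)
  then show "m \<in> carrier_mat 3 3 \<and> m$$(1,0) = 0 \<and> m$$(2,0) = 0 \<and> m$$(1,2) = 0 \<and> m$$(2,1) = 0
     \<and> m$$(1,1) = m$$(0,0) \<and> m$$(2,2) = m$$(0,0)" by simp
next
  assume H: "m \<in> carrier_mat 3 3 \<and> m$$(1,0) = 0 \<and> m$$(2,0) = 0 \<and> m$$(1,2) = 0 \<and> m$$(2,1) = 0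
     \<and> m$$(1,1) = m$$(0,0) \<and> m$$(2,2) = m$$(0,0)"
  have "m = S4_mat (m$$(0,0)) (m$$(0,1)) (m$$(0,2))"
    by (rule mat3_eqI) (use H in auto)
  then show "m \<in> S4" unfolding S4_def by blast
qed

lemma S4_carrier: "x \<in> (S4::'r::comm_ring_1 mat set) \<Longrightarrow> x \<in> carrier_mat 3 3"
  by (simp add: mem_S4)

definition kap :: "nat \<Rightarrow> 'r::comm_ring_1 mat \<Rightarrow> 'r" where
  "kap c m = (if c = 0 then m$$(1,0) else if c = 1 then m$$(2,0) else if c = 2 then m$$(1,2)
     else if c = 3 then m$$(2,1) else if c = 4 then m$$(1,1) - m$$(2,2) else m$$(0,0) - m$$(2,2))"

lemma S4_kap: "(m::'r::comm_ring_1 mat) \<in> carrier_mat 3 3 \<Longrightarrow> m \<in> S4 \<longleftrightarrow> (\<forall>c<6. kap c m = 0)"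
  unfolding mem_S4 kap_def
  apply (rule iffI)
   apply (auto simp: eval_nat_numeral less_Suc_eq)[1]
  apply (auto simp: eval_nat_numeral less_Suc_eq)
  done

lemma kap_add: "m1 \<in> carrier_mat 3 3 \<Longrightarrow> m2 \<in> carrier_mat 3 3 \<Longrightarrow> kap c (m1 + m2) = kap c m1 + kap c m2"
  by (simp add: kap_def)
lemma kap_minus: "m1 \<in> carrier_mat 3 3 \<Longrightarrow> m2 \<in> carrier_mat 3 3 \<Longrightarrow> kap c (m1 - m2) = kap c m1 - kap c m2"
  by (simp add: kap_def)
lemma kap_smult: "m \<in> carrier_mat 3 3 \<Longrightarrow> kap c (r \<cdot>\<^sub>m m) = r * kap c m"
  by (simp add: kap_def right_diff_distrib)
lemma kap_zero[simp]: "kap c (0\<^sub>m 3 3) = 0"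
  by (simp add: kap_def)

lemma S4_mult: "S4_mat a b c * S4_mat a' b' c' = S4_mat (a*a') (a*b'+b*a') (a*c'+c*a')"
  by (rule mat3_eqI) (auto simp del: index_mult_mat simp add: mult3 algebra_simps mult_carrier_mat[of _ 3 3 _ 3])

lemma S4_elem: "x \<in> S4 \<Longrightarrow> x = S4_mat (x$$(0,0)) (x$$(0,1)) (x$$(0,2))"
  unfolding S4_def by auto

lemma S4_mult_closed: "x \<in> S4 \<Longrightarrow> y \<in> S4 \<Longrightarrow> x * y \<in> S4"
  unfolding S4_def using S4_mult by blast

lemma S4_add_closed: "x \<in> S4 \<Longrightarrow> y \<in> S4 \<Longrightarrow> x + y \<in> (S4::'r::comm_ring_1 mat set)"
  unfolding mem_S4 by auto
lemma S4_minus_closed: "x \<in> S4 \<Longrightarrow> y \<in> S4 \<Longrightarrow> x - y \<in> (S4::'r::comm_ring_1 mat set)"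
  unfolding mem_S4 by auto
lemma S4_smult_closed: "x \<in> S4 \<Longrightarrow> r \<cdot>\<^sub>m x \<in> (S4::'r::comm_ring_1 mat set)"
  unfolding mem_S4 by auto
lemma S4_zero: "0\<^sub>m 3 3 \<in> (S4::'r::comm_ring_1 mat set)"
  unfolding mem_S4 by auto
lemma S4_one: "1\<^sub>m 3 \<in> (S4::'r::comm_ring_1 mat set)"
  unfolding mem_S4 by auto

definition Lop :: "'r::comm_ring_1 mat \<Rightarrow> nat \<Rightarrow> (nat \<Rightarrow> 'r) \<Rightarrow> 'r" where
  "Lop x c k = (if c = 5 then x$$(0,0) * k 5 + x$$(0,1) * k 0 + x$$(0,2) * k 1 else x$$(0,0) * k c)"
definition Rop :: "'r::comm_ring_1 mat \<Rightarrow> nat \<Rightarrow> (nat \<Rightarrow> 'r) \<Rightarrow> 'r" where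
  "Rop x c k = (if c = 2 then x$$(0,0) * k 2 + x$$(0,2) * k 0
     else if c = 3 then x$$(0,0) * k 3 + x$$(0,1) * k 1
     else if c = 4 then x$$(0,0) * k 4 + x$$(0,1) * k 0 - x$$(0,2) * k 1
     else if c = 5 then x$$(0,0) * k 5 - x$$(0,2) * k 1
     else x$$(0,0) * k c)"

lemma kap_Lmult:
  assumes "x \<in> S4" "m \<in> carrier_mat 3 3" "c < 6"
  shows "kap c (x * m) = Lop x c (\<lambda>d. kap d m)"
proof -
  obtain a b cc where x: "x = S4_mat a b cc" using assms(1) unfolding S4_def by auto
  show ?thesis using assms(2,3) unfolding x kap_def Lop_def
    by (auto dest!: less6_cases simp del: index_mult_mat simp add: mult3 algebra_simps)
qed

lemma kap_Rmult:
  assumes "x \<in> S4" "m \<in> carrier_mat 3 3" "c < 6"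
  shows "kap c (m * x) = Rop x c (\<lambda>d. kap d m)"
proof -
  obtain a b cc where x: "x = S4_mat a b cc" using assms(1) unfolding S4_def by auto
  show ?thesis using assms(2,3) unfolding x kap_def Rop_def
    by (auto dest!: less6_cases simp del: index_mult_mat simp add: mult3 algebra_simps)
qed


definition mrg :: "nat \<Rightarrow> 'a::times list \<Rightarrow> 'a list" where
  "mrg i xs = take i xs @ [xs!i * xs!(i+1)] @ drop (i+2) xs"

lemma length_mrg[simp]: "Suc i < length xs \<Longrightarrow> length (mrg i xs) = length xs - 1"
  by (simp add: mrg_def)

lemma nth_mrg: "Suc i < length xs \<Longrightarrow> k < length xs - 1 \<Longrightarrow>
  mrg i xs ! k = (if k < i then xs!k else if k = i then xs!i * xs!(i+1) else xs!(k+1))"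
  by (auto simp: mrg_def nth_append min_def)

lemma drop1_mrg: "Suc k < length xs \<Longrightarrow> 1 \<le> k \<Longrightarrow> drop 1 (mrg k xs) = mrg (k-1) (drop 1 xs)"
  by (rule nth_equalityI) (auto simp: nth_mrg)

lemma drop1_mrg': "Suc k < length xs \<Longrightarrow> 1 \<le> k \<Longrightarrow> drop (Suc 0) (mrg k xs) = mrg (k - Suc 0) (drop (Suc 0) xs)"
  using drop1_mrg by simp

lemma mrg_mrg: "Suc a < b \<Longrightarrow> Suc b < length xs \<Longrightarrow> mrg a (mrg b xs) = mrg (b-1) (mrg a xs)"
  by (rule nth_equalityI) (auto simp: nth_mrg)

lemma mrg_assoc:
  assumes "Suc (Suc i) < length xs" "xs!i \<in> carrier_mat 3 3" "xs!(Suc i) \<in> carrier_mat 3 3" "xs!(Suc (Suc i)) \<in> carrier_mat 3 3"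
  shows "mrg i (mrg (Suc i) xs) = mrg i (mrg i (xs::'r::comm_ring_1 mat list))"
  using assms by (intro nth_equalityI) (auto simp: nth_mrg assoc_mult_mat[of _ 3 3 _ 3 _ 3])

lemma take_mrg: "length xs = Suc (Suc n) \<Longrightarrow> a < n \<Longrightarrow> take n (mrg a xs) = mrg a (take (Suc n) xs)"
  by (rule nth_equalityI) (auto simp: nth_mrg)

lemma mrg0_nth0: "Suc 0 < length xs \<Longrightarrow> mrg 0 xs ! 0 = xs!0 * xs!1"
  by (simp add: mrg_def)
lemma drop1_mrg0: "Suc 0 < length xs \<Longrightarrow> drop 1 (mrg 0 xs) = drop 2 xs"
  by (simp add: mrg_def numeral_2_eq_2)

definition face :: "nat \<Rightarrow> nat \<Rightarrow> ('r::comm_ring_1 mat list \<Rightarrow> 'r mat) \<Rightarrow> 'r mat list \<Rightarrow> 'r mat" where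
  "face n i f xs = (if i = 0 then xs!0 * f (drop 1 xs) else if i \<le> n then f (mrg (i-1) xs) else f (take n xs) * xs!n)"

lemma hdiff_face: "p < 3 \<Longrightarrow> q < 3 \<Longrightarrow> hdiff n f xs $$ (p,q) = (\<Sum>i\<le>Suc n. (-1)^i * face n i f xs $$ (p,q))"
proof -
  assume pq: "p<3" "q<3"
  have "(\<Sum>i\<le>Suc n. (-1)^i * face n i f xs $$ (p,q)) = face n 0 f xs $$ (p,q) + (\<Sum>i\<le>n. (-1)^(Suc i) * face n (Suc i) f xs $$ (p,q))"
    by (subst sum.atMost_Suc_shift) simp
  also have "(\<Sum>i\<le>n. (-1)^(Suc i) * face n (Suc i) f xs $$ (p,q)) = (\<Sum>i<n. (-1)^(Suc i) * face n (Suc i) f xs $$ (p,q)) + (-1)^(Suc n) * face n (Suc n) f xs $$ (p,q)"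
    by (simp add: lessThan_Suc_atMost[symmetric])
  also have "(\<Sum>i<n. (-1)^(Suc i) * face n (Suc i) f xs $$ (p,q)) = (\<Sum>i<n. (-1)^(Suc i) * f (mrg i xs) $$ (p,q))"
    by (rule sum.cong) (auto simp: face_def)
  finally show ?thesis using pq by (simp add: hdiff_def face_def mrg_def)
qed

lemma hdiff_carrier[simp]: "hdiff n f xs \<in> carrier_mat 3 3"
  by (simp add: hdiff_def)
lemma hdiff_dim[simp]: "dim_row (hdiff n f xs) = 3" "dim_col (hdiff n f xs) = 3"
  by (simp_all add: hdiff_def)

lemma kap_hdiff: "kap c (hdiff n f xs) = (\<Sum>i\<le>Suc n. (-1)^i * kap c (face n i f xs))"
  by (simp add: kap_def hdiff_face sum_subtractf[symmetric] right_diff_distrib)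

lemma tuples_mrg: "xs \<in> tuples (S4::'r::comm_ring_1 mat set) (Suc n) \<Longrightarrow> i < n \<Longrightarrow> mrg i xs \<in> tuples S4 n"
  unfolding tuples_def mrg_def
  by (auto dest: in_set_takeD in_set_dropD intro!: S4_mult_closed nth_mem)

lemma tuples_drop1: "xs \<in> tuples A (Suc n) \<Longrightarrow> drop 1 xs \<in> tuples A n"
  unfolding tuples_def by (auto dest: in_set_dropD)
lemma tuples_take: "xs \<in> tuples A (Suc n) \<Longrightarrow> take n xs \<in> tuples A n"
  unfolding tuples_def by (auto dest: in_set_takeD)
lemma tuples_nth: "xs \<in> tuples A n \<Longrightarrow> i < n \<Longrightarrow> xs!i \<in> A"
  unfolding tuples_def by auto
lemma tuples_len: "xs \<in> tuples A n \<Longrightarrow> length xs = n"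
  unfolding tuples_def by auto
lemma tuples_nthc: "xs \<in> tuples (S4::'r::comm_ring_1 mat set) n \<Longrightarrow> i < n \<Longrightarrow> xs!i \<in> carrier_mat 3 3"
  using tuples_nth S4_carrier by blast

lemma face_carrier:
  assumes F: "\<forall>ys\<in>tuples S4 n. F ys \<in> carrier_mat 3 3" and xs: "xs \<in> tuples (S4::'r::comm_ring_1 mat set) (Suc n)"
  shows "face n i F xs \<in> carrier_mat 3 3"
  using F xs tuples_nthc[OF xs] tuples_mrg[OF xs, of "i-1"] tuples_drop1[OF xs] tuples_take[OF xs]
  unfolding face_def by (auto intro!: mult_carrier_mat[of _ 3 3 _ 3])

lemma lmul_sum:
  assumes "(x::'r::comm_ring_1 mat) \<in> carrier_mat 3 3" "H \<in> carrier_mat 3 3" "\<forall>i\<in>I. M i \<in> carrier_mat 3 3"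
   "\<forall>k<3. H $$ (k,q) = (\<Sum>i\<in>I. s i * M i $$ (k,q))" "p<3" "q<3"
  shows "(x * H) $$ (p,q) = (\<Sum>i\<in>I. s i * (x * M i) $$ (p,q))"
proof -
  have "(x * H) $$ (p,q) = x$$(p,0)*H$$(0,q) + x$$(p,1)*H$$(1,q) + x$$(p,2)*H$$(2,q)"
    using assms by (simp only: mult3)
  also have "\<dots> = (\<Sum>i\<in>I. x$$(p,0)*(s i * M i$$(0,q)) + x$$(p,1)*(s i *M i$$(1,q)) + x$$(p,2)*(s i * M i$$(2,q)))"
    using assms(4) by (simp add: sum_distrib_left sum.distrib)
  also have "\<dots> = (\<Sum>i\<in>I. s i * (x$$(p,0)*M i$$(0,q) + x$$(p,1)*M i$$(1,q) + x$$(p,2)*M i$$(2,q)))"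
    by (rule sum.cong) (simp_all add: algebra_simps)
  also have "\<dots> = (\<Sum>i\<in>I. s i * (x * M i) $$ (p,q))"
    using assms by (intro sum.cong) (simp_all only: mult3)
  finally show ?thesis .
qed

lemma rmul_sum:
  assumes "(x::'r::comm_ring_1 mat) \<in> carrier_mat 3 3" "H \<in> carrier_mat 3 3" "\<forall>i\<in>I. M i \<in> carrier_mat 3 3"
   "\<forall>k<3. H $$ (p,k) = (\<Sum>i\<in>I. s i * M i $$ (p,k))" "p<3" "q<3"
  shows "(H * x) $$ (p,q) = (\<Sum>i\<in>I. s i * (M i * x) $$ (p,q))"
proof -
  have "(H * x) $$ (p,q) = H$$(p,0)*x$$(0,q) + H$$(p,1)*x$$(1,q) + H$$(p,2)*x$$(2,q)"
    using assms by (simp only: mult3)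
  also have "\<dots> = (\<Sum>i\<in>I. (s i * M i$$(p,0))*x$$(0,q) + (s i * M i$$(p,1))*x$$(1,q) + (s i * M i$$(p,2))*x$$(2,q))"
    using assms(4) by (simp add: sum_distrib_right sum.distrib)
  also have "\<dots> = (\<Sum>i\<in>I. s i * (M i$$(p,0)*x$$(0,q) + M i$$(p,1)*x$$(1,q) + M i$$(p,2)*x$$(2,q)))"
    by (rule sum.cong) (simp_all add: algebra_simps)
  also have "\<dots> = (\<Sum>i\<in>I. s i * (M i * x) $$ (p,q))"
    using assms by (intro sum.cong) (simp_all only: mult3)
  finally show ?thesis .
qed


lemma face_hdiff:
  assumes F: "\<forall>ys\<in>tuples S4 n. F ys \<in> carrier_mat 3 3" and xs: "xs \<in> tuples (S4::'r::comm_ring_1 mat set) (Suc (Suc n))"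
    and pq: "p < 3" "q < 3"
  shows "face (Suc n) j (hdiff n F) xs $$ (p,q) = (\<Sum>i\<le>Suc n. (-1)^i * face (Suc n) j (face n i F) xs $$ (p,q))"
proof -
  consider "j = 0" | "j \<noteq> 0" "j \<le> Suc n" | "\<not> j \<le> Suc n" by linarith
  then show ?thesis
  proof cases
    case 1
    have d: "drop 1 xs \<in> tuples S4 (Suc n)" using tuples_drop1[OF xs] .
    have "(xs!0 * hdiff n F (drop 1 xs)) $$ (p,q) = (\<Sum>i\<le>Suc n. (-1)^i * (xs!0 * face n i F (drop 1 xs)) $$ (p,q))"
      by (rule lmul_sum) (use tuples_nthc[OF xs, of 0] face_carrier[OF F d] pq in \<open>auto simp: hdiff_face\<close>)
    then show ?thesis using 1 by (simp add: face_def)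
  next
    case 2
    then show ?thesis using pq by (simp add: face_def hdiff_face)
  next
    case 3
    have t: "take (Suc n) xs \<in> tuples S4 (Suc n)" using tuples_take[OF xs] .
    have "(hdiff n F (take (Suc n) xs) * xs!(Suc n)) $$ (p,q) = (\<Sum>i\<le>Suc n. (-1)^i * (face n i F (take (Suc n) xs) * xs!(Suc n)) $$ (p,q))"
      by (rule rmul_sum) (use tuples_nthc[OF xs, of "Suc n"] face_carrier[OF F t] pq in \<open>auto simp: hdiff_face\<close>)
    then show ?thesis using 3 by (simp add: face_def)
  qed
qed

lemma simplicial:
  assumes F: "\<forall>ys\<in>tuples S4 n. F ys \<in> carrier_mat 3 3" and xs: "xs \<in> tuples (S4::'r::comm_ring_1 mat set) (Suc (Suc n))"
    and ij: "i < j" "j \<le> Suc (Suc n)"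
  shows "face (Suc n) j (face n i F) xs = face (Suc n) i (face n (j-1) F) xs"
proof -
  have len: "length xs = Suc (Suc n)" using tuples_len[OF xs] .
  have c: "\<And>k. k < Suc (Suc n) \<Longrightarrow> xs!k \<in> carrier_mat 3 3" using tuples_nthc[OF xs] .
  have Fc: "\<And>ys. ys \<in> tuples S4 n \<Longrightarrow> F ys \<in> carrier_mat 3 3" using F by blast
  consider "i = 0" "j = 1" | "i = 0" "2 \<le> j" "j \<le> Suc n" | "i = 0" "j = Suc (Suc n)" | "1 \<le> i" "j = Suc i" "j \<le> Suc n"
    | "1 \<le> i" "Suc (Suc i) \<le> j" "j \<le> Suc n" | "1 \<le> i" "i \<le> n" "j = Suc (Suc n)" | "i = Suc n" "j = Suc (Suc n)"
    using ij by linarith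
  then show ?thesis
  proof cases
    case 1
    have t2: "drop 2 xs \<in> tuples S4 n" using tuples_drop1[OF tuples_drop1[OF xs]] by (simp add: numeral_2_eq_2)
    have "face (Suc n) j (face n i F) xs = (xs!0 * xs!1) * F (drop 2 xs)"
      using 1 len by (simp add: face_def mrg_def numeral_2_eq_2)
    also have "\<dots> = xs!0 * (xs!1 * F (drop 2 xs))"
      by (rule assoc_mult_mat[OF c c Fc[OF t2]]) auto
    also have "\<dots> = face (Suc n) i (face n (j-1) F) xs"
      using 1 len by (simp add: face_def nth_drop numeral_2_eq_2)
    finally show ?thesis .
  next
    case 2
    have jn: "j - Suc 0 \<le> n" using 2 by linarith
    show ?thesis
      using 2 len jn by (simp add: face_def nth_mrg drop1_mrg')
  next
    case 3
    have t: "take n (drop 1 xs) \<in> tuples S4 n" using tuples_take[OF tuples_drop1[OF xs]] .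
    have "face (Suc n) j (face n i F) xs = (xs!0 * F (take n (drop 1 xs))) * xs!(Suc n)"
      using 3 len by (simp add: face_def drop_take)
    also have "\<dots> = xs!0 * (F (take n (drop 1 xs)) * xs!(Suc n))"
      by (rule assoc_mult_mat[OF c Fc[OF t] c]) auto
    also have "\<dots> = face (Suc n) i (face n (j-1) F) xs"
      using 3 len by (simp add: face_def)
    finally show ?thesis .
  next
    case 4
    have "mrg (i-1) (mrg (Suc (i-1)) xs) = mrg (i-1) (mrg (i-1) xs)"
      by (rule mrg_assoc) (use 4 len c in auto)
    then show ?thesis using 4 len by (simp add: face_def)
  next
    case 5
    have "mrg (i-1) (mrg (j-1) xs) = mrg (j-1-1) (mrg (i-1) xs)"
      by (rule mrg_mrg) (use 5 len in auto)
    moreover have jn: "j - Suc 0 \<le> n" using 5 by linarith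
    ultimately show ?thesis using 5 len by (simp add: face_def)
  next
    case 6
    have "take n (mrg (i-1) xs) = mrg (i-1) (take (Suc n) xs)"
      by (rule take_mrg) (use 6 len in auto)
    moreover have "i - Suc 0 < n" using 6 by linarith
    then have "mrg (i-1) xs ! n = xs ! Suc n" using 6 len by (simp add: nth_mrg)
    ultimately show ?thesis using 6 len by (simp add: face_def)
  next
    case 7
    have t: "take n xs \<in> tuples S4 n" using tuples_take[OF tuples_take[OF xs]] by (simp add: min_def)
    have "face (Suc n) j (face n i F) xs = (F (take n xs) * xs!n) * xs!(Suc n)"
      using 7 len by (simp add: face_def min_def)
    also have "\<dots> = F (take n xs) * (xs!n * xs!(Suc n))"
      by (rule assoc_mult_mat[OF Fc[OF t] c c]) auto
    also have "\<dots> = face (Suc n) i (face n (j-1) F) xs"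
      using 7 len by (simp add: face_def mrg_def nth_append)
    finally show ?thesis .
  qed
qed

lemma tri_swap: "(\<Sum>k\<le>N. \<Sum>i\<le>k. h i k) = (\<Sum>j\<le>(N::nat). \<Sum>i\<in>{j..N}. (h j i::'a::comm_monoid_add))"
proof -
  have "(\<Sum>j\<le>N. \<Sum>i\<in>{j..N}. h j i) = (\<Sum>j\<in>{..N}. \<Sum>i\<in>{i. i \<in> {..N} \<and> j \<le> i}. h j i)"
    by (intro sum.cong refl) auto
  also have "\<dots> = (\<Sum>i\<in>{..N}. \<Sum>j\<in>{j. j\<in>{..N} \<and> j \<le> i}. h j i)"
    by (rule sum.swap_restrict) auto
  also have "\<dots> = (\<Sum>k\<le>N. \<Sum>i\<le>k. h i k)"
    by (intro sum.cong refl) auto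
  finally show ?thesis by simp
qed

lemma alt_double:
  fixes T :: "nat \<Rightarrow> nat \<Rightarrow> 'a::comm_ring_1"
  assumes T: "\<And>i j. i < j \<Longrightarrow> j \<le> Suc N \<Longrightarrow> T j i = T i (j - 1)"
  shows "(\<Sum>j\<le>Suc N. \<Sum>i\<le>N. (-1)^(j+i) * T j i) = 0"
proof -
  have sp: "(\<Sum>i\<le>N. g i) = (\<Sum>i<j. g i) + (\<Sum>i\<in>{j..N}. g i)" if "j \<le> Suc N" for j and g :: "nat \<Rightarrow> 'a"
  proof -
    have "{..N} = {..<j} \<union> {j..N}" using that by auto
    then show ?thesis by (simp add: sum.union_disjoint ivl_disj_int)
  qed
  have A: "(\<Sum>j\<le>Suc N. \<Sum>i\<le>N. (-1)^(j+i) * T j i) = (\<Sum>j\<le>Suc N. \<Sum>i<j. (-1)^(j+i) * T j i) + (\<Sum>j\<le>Suc N. \<Sum>i\<in>{j..N}. (-1)^(j+i) * T j i)"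
    by (simp add: sum.distrib[symmetric] sp)
  have B: "(\<Sum>j\<le>Suc N. \<Sum>i<j. (-1)^(j+i) * T j i) = - (\<Sum>k\<le>N. \<Sum>i\<le>k. (-1)^(i+k) * T i k)"
  proof -
    have "(\<Sum>j\<le>Suc N. \<Sum>i<j. (-1)^(j+i) * T j i) = (\<Sum>k\<le>N. \<Sum>i<Suc k. (-1)^(Suc k+i) * T (Suc k) i)"
      by (subst sum.atMost_Suc_shift) simp
    also have "\<dots> = (\<Sum>k\<le>N. \<Sum>i\<le>k. - ((-1)^(i+k) * T i k))"
      by (intro sum.cong refl) (auto simp: lessThan_Suc_atMost T add.commute)
    finally show ?thesis by (simp only: sum_negf)
  qed
  have C: "(\<Sum>j\<le>Suc N. \<Sum>i\<in>{j..N}. (-1)^(j+i) * T j i) = (\<Sum>j\<le>N. \<Sum>i\<in>{j..N}. (-1)^(j+i) * T j i)"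
    by simp
  show ?thesis unfolding A B C tri_swap[where N=N and h="\<lambda>i k. (-1)^(i+k) * T i k"] by (simp add: add.commute)
qed

lemma d2:
  assumes F: "\<forall>ys\<in>tuples S4 n. F ys \<in> carrier_mat 3 3" and xs: "xs \<in> tuples (S4::'r::comm_ring_1 mat set) (Suc (Suc n))"
  shows "hdiff (Suc n) (hdiff n F) xs = 0\<^sub>m 3 3"
proof (rule eq_matI)
  fix p q assume "p < dim_row (0\<^sub>m 3 3 :: 'r mat)" "q < dim_col (0\<^sub>m 3 3 :: 'r mat)"
  then have pq: "p < 3" "q < 3" by auto
  have "hdiff (Suc n) (hdiff n F) xs $$ (p,q) = (\<Sum>j\<le>Suc (Suc n). (-1)^j * (\<Sum>i\<le>Suc n. (-1)^i * face (Suc n) j (face n i F) xs $$ (p,q)))"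
    using pq by (simp add: hdiff_face face_hdiff[OF F xs])
  also have "\<dots> = (\<Sum>j\<le>Suc (Suc n). \<Sum>i\<le>Suc n. (-1)^(j+i) * face (Suc n) j (face n i F) xs $$ (p,q))"
    by (simp only: sum_distrib_left power_add mult.assoc)
  also have "\<dots> = 0"
    by (rule alt_double) (simp add: simplicial[OF F xs])
  finally show "hdiff (Suc n) (hdiff n F) xs $$ (p,q) = 0\<^sub>m 3 3 $$ (p,q)" using pq by simp
qed auto


definition mlin :: "nat \<Rightarrow> ('r::comm_ring_1 mat list \<Rightarrow> nat \<Rightarrow> 'r) \<Rightarrow> bool" where
  "mlin n \<Phi> \<longleftrightarrow> (\<forall>xs\<in>tuples S4 n. \<forall>i<n. \<forall>x\<in>S4. \<forall>y\<in>S4. \<forall>r s c. c < 6 \<longrightarrow>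
      \<Phi> (xs[i := r \<cdot>\<^sub>m x + s \<cdot>\<^sub>m y]) c = r * \<Phi> (xs[i:=x]) c + s * \<Phi> (xs[i:=y]) c)"

lemma tuples_upd: "xs \<in> tuples A n \<Longrightarrow> v \<in> A \<Longrightarrow> xs[i:=v] \<in> tuples A n"
  unfolding tuples_def by (auto dest: set_update_subset_insert[THEN subsetD])

lemma S4_lin: "x \<in> S4 \<Longrightarrow> y \<in> S4 \<Longrightarrow> r \<cdot>\<^sub>m x + s \<cdot>\<^sub>m y \<in> (S4::'r::comm_ring_1 mat set)"
  by (intro S4_add_closed S4_smult_closed)

lemma cochain_iff:
  "cochain (S4::'r::comm_ring_1 mat set) n f \<longleftrightarrow> (\<forall>xs\<in>tuples S4 n. f xs \<in> carrier_mat 3 3) \<and> mlin n (\<lambda>xs c. kap c (f xs))"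
proof -
  have key: "f (xs[i := r \<cdot>\<^sub>m x + s \<cdot>\<^sub>m y]) - (r \<cdot>\<^sub>m f (xs[i := x]) + s \<cdot>\<^sub>m f (xs[i := y])) \<in> S4
     \<longleftrightarrow> (\<forall>c<6. kap c (f (xs[i := r \<cdot>\<^sub>m x + s \<cdot>\<^sub>m y])) = r * kap c (f (xs[i:=x])) + s * kap c (f (xs[i:=y])))"
    if C: "\<forall>xs\<in>tuples S4 n. f xs \<in> carrier_mat 3 3" and xs: "xs \<in> tuples S4 n" and xy: "x \<in> S4" "y \<in> S4" for xs i x y r s
  proof -
    have c1: "f (xs[i := r \<cdot>\<^sub>m x + s \<cdot>\<^sub>m y]) \<in> carrier_mat 3 3" using C tuples_upd[OF xs S4_lin[OF xy]] by blast
    have c2: "f (xs[i := x]) \<in> carrier_mat 3 3" using C tuples_upd[OF xs xy(1)] by blast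
    have c3: "f (xs[i := y]) \<in> carrier_mat 3 3" using C tuples_upd[OF xs xy(2)] by blast
    show ?thesis using c1 c2 c3
      by (subst S4_kap) (auto simp: kap_minus kap_add kap_smult)
  qed
  show ?thesis
    unfolding cochain_def mlin_def M3_def using key by (auto 0 0)
qed

lemma mlin_cong: "mlin n \<Phi> \<Longrightarrow> (\<And>xs c. xs \<in> tuples S4 n \<Longrightarrow> c < 6 \<Longrightarrow> \<Psi> xs c = \<Phi> xs c) \<Longrightarrow> mlin n \<Psi>"
  unfolding mlin_def by (simp add: tuples_upd S4_lin)

lemma mlin_add: "mlin n \<Phi> \<Longrightarrow> mlin n \<Psi> \<Longrightarrow> mlin n (\<lambda>xs c. \<Phi> xs c + t * \<Psi> xs c)"
  unfolding mlin_def by (simp add: algebra_simps)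

lemma mlin_sum: "finite I \<Longrightarrow> (\<And>j. j \<in> I \<Longrightarrow> mlin n (\<Phi> j)) \<Longrightarrow> mlin n (\<lambda>xs c. \<Sum>j\<in>I. a j * \<Phi> j xs c)"
proof (induction I rule: finite_induct)
  case empty
  then show ?case by (simp add: mlin_def)
next
  case (insert x F)
  have "mlin n (\<lambda>xs c. (\<Sum>j\<in>F. a j * \<Phi> j xs c) + a x * \<Phi> x xs c)"
    using insert by (intro mlin_add) auto
  then show ?case using insert by (simp add: add.commute)
qed

definition ex :: "'r::comm_ring_1 mat" where "ex = S4_mat 0 1 0"
definition ey :: "'r::comm_ring_1 mat" where "ey = S4_mat 0 0 1"
definition Bs :: "'r::comm_ring_1 mat set" where "Bs = {1\<^sub>m 3, ex, ey}"

lemma ex_S4[simp]: "ex \<in> S4" and ey_S4[simp]: "ey \<in> S4"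
  unfolding ex_def ey_def S4_def by blast+

lemma Bs_S4: "Bs \<subseteq> S4"
  unfolding Bs_def using S4_one by auto

lemma S4_decomp: "x \<in> S4 \<Longrightarrow> x = (x$$(0,0)) \<cdot>\<^sub>m 1\<^sub>m 3 + 1 \<cdot>\<^sub>m ((x$$(0,1)) \<cdot>\<^sub>m ex + (x$$(0,2)) \<cdot>\<^sub>m ey)"
  by (rule mat3_eqI) (auto simp: mem_S4 ex_def ey_def)

lemma mlin_basis:
  fixes \<Phi> :: "'r::comm_ring_1 mat list \<Rightarrow> nat \<Rightarrow> 'r" and xs :: "'r mat list"
  assumes L: "mlin n \<Phi>" and H: "\<And>xs c. xs \<in> tuples S4 n \<Longrightarrow> set xs \<subseteq> Bs \<Longrightarrow> c < 6 \<Longrightarrow> \<Phi> xs c = 0"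
  shows "xs \<in> tuples S4 n \<Longrightarrow> c < 6 \<Longrightarrow> \<Phi> xs c = 0"
proof -
  have P: "\<forall>xs\<in>tuples S4 n. (\<forall>i. k \<le> i \<longrightarrow> i < n \<longrightarrow> xs!i \<in> Bs) \<longrightarrow> (\<forall>c<6. \<Phi> xs c = 0)" for k
  proof (induction k)
    case 0
    show ?case
    proof (intro ballI impI allI)
      fix xs :: "'r mat list" and c :: nat assume xs: "xs \<in> tuples S4 n" and B: "\<forall>i. 0 \<le> i \<longrightarrow> i < n \<longrightarrow> xs ! i \<in> Bs" and c: "c < 6"
      have "set xs \<subseteq> Bs" using B tuples_len[OF xs] by (auto simp: in_set_conv_nth)
      then show "\<Phi> xs c = 0" using H xs c by blast
    qed
  next
    case (Suc k)
    show ?case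
    proof (intro ballI impI allI)
      fix xs :: "'r mat list" and c :: nat assume xs: "xs \<in> tuples S4 n" and B: "\<forall>i. Suc k \<le> i \<longrightarrow> i < n \<longrightarrow> xs ! i \<in> Bs" and c: "c < 6"
      show "\<Phi> xs c = 0"
      proof (cases "k < n")
        case False
        then show ?thesis using Suc.IH xs B c by auto
      next
        case True
        have len: "length xs = n" using tuples_len[OF xs] .
        have Bk: "\<And>v. v \<in> Bs \<Longrightarrow> \<Phi> (xs[k:=v]) c = 0"
        proof -
          fix v :: "'r mat" assume v: "v \<in> Bs"
          have "xs[k:=v] \<in> tuples S4 n" using tuples_upd[OF xs] v Bs_S4 by auto
          moreover have "\<forall>i. k \<le> i \<longrightarrow> i < n \<longrightarrow> xs[k:=v] ! i \<in> Bs"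
            using B v len by (auto simp: nth_list_update)
          ultimately show "\<Phi> (xs[k:=v]) c = 0" using Suc.IH c by blast
        qed
        define a where "a = xs!k"
        have a: "a \<in> S4" using tuples_nth[OF xs True] a_def by simp
        define y where "y = (a$$(0,1)) \<cdot>\<^sub>m ex + (a$$(0,2)) \<cdot>\<^sub>m (ey::'r mat)"
        have y: "y \<in> S4" unfolding y_def by (intro S4_lin) auto
        have "\<Phi> (xs[k:=y]) c = a$$(0,1) * \<Phi> (xs[k:=ex]) c + a$$(0,2) * \<Phi> (xs[k:=ey]) c"
          using L xs True c unfolding mlin_def y_def by auto
        also have "\<dots> = 0" using Bk by (simp add: Bs_def)
        finally have y0: "\<Phi> (xs[k:=y]) c = 0" .
        have "\<Phi> xs c = \<Phi> (xs[k := (a$$(0,0)) \<cdot>\<^sub>m 1\<^sub>m 3 + 1 \<cdot>\<^sub>m y]) c"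
          using S4_decomp[OF a] a_def y_def by simp
        also have "\<dots> = a$$(0,0) * \<Phi> (xs[k:=1\<^sub>m 3]) c + 1 * \<Phi> (xs[k:=y]) c"
          using L xs True c y S4_one unfolding mlin_def by blast
        also have "\<dots> = 0" using Bk y0 by (simp add: Bs_def)
        finally show ?thesis .
      qed
    qed
  qed
  show "xs \<in> tuples S4 n \<Longrightarrow> c < 6 \<Longrightarrow> \<Phi> xs c = 0"
    using P[of n] by auto
qed


lemma Lop_lin_mat: "x \<in> carrier_mat 3 3 \<Longrightarrow> y \<in> carrier_mat 3 3 \<Longrightarrow> Lop (r \<cdot>\<^sub>m x + s \<cdot>\<^sub>m y) c k = r * Lop x c k + s * Lop y c k"
  by (simp add: Lop_def algebra_simps)
lemma Rop_lin_mat: "x \<in> carrier_mat 3 3 \<Longrightarrow> y \<in> carrier_mat 3 3 \<Longrightarrow> Rop (r \<cdot>\<^sub>m x + s \<cdot>\<^sub>m y) c k = r * Rop x c k + s * Rop y c k"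
  by (simp add: Rop_def algebra_simps)
lemma Lop_lin_k: "Lop x c (\<lambda>d. r * k1 d + s * k2 d) = r * Lop x c k1 + s * Lop x c k2"
  by (simp add: Lop_def algebra_simps)
lemma Rop_lin_k: "Rop x c (\<lambda>d. r * k1 d + s * k2 d) = r * Rop x c k1 + s * Rop x c k2"
  by (simp add: Rop_def algebra_simps)
lemma Lop_cong: "(\<And>d. d < 6 \<Longrightarrow> k1 d = k2 d) \<Longrightarrow> c < 6 \<Longrightarrow> Lop x c k1 = Lop x c k2"
  by (simp add: Lop_def)
lemma Rop_cong: "(\<And>d. d < 6 \<Longrightarrow> k1 d = k2 d) \<Longrightarrow> c < 6 \<Longrightarrow> Rop x c k1 = Rop x c k2"
  by (simp add: Rop_def)

lemma mrg_upd_lt: "i < a \<Longrightarrow> Suc a < length xs \<Longrightarrow> mrg a (xs[i:=v]) = (mrg a xs)[i:=v]"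
  by (rule nth_equalityI) (auto simp: nth_mrg nth_list_update)
lemma mrg_upd_eq: "Suc a < length xs \<Longrightarrow> mrg a (xs[a:=v]) = (mrg a xs)[a := v * xs!(Suc a)]"
  by (rule nth_equalityI) (auto simp: nth_mrg nth_list_update)
lemma mrg_upd_suc: "Suc a < length xs \<Longrightarrow> mrg a (xs[Suc a:=v]) = (mrg a xs)[a := xs!a * v]"
  by (rule nth_equalityI) (auto simp: nth_mrg nth_list_update)
lemma mrg_upd_gt: "Suc a < i \<Longrightarrow> i < length xs \<Longrightarrow> mrg a (xs[i:=v]) = (mrg a xs)[i - 1 := v]"
  by (rule nth_equalityI) (auto simp: nth_mrg nth_list_update)
lemma drop1_upd0: "drop (Suc 0) (xs[0:=v]) = drop (Suc 0) xs"
  by (cases xs) auto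
lemma drop1_upd: "0 < i \<Longrightarrow> drop (Suc 0) (xs[i:=v]) = (drop (Suc 0) xs)[i - 1 := v]"
  by (cases xs; cases i) auto
lemma take_upd_lt: "i < n \<Longrightarrow> take n (xs[i:=v]) = (take n xs)[i:=v]"
  by (rule take_update_swap)
lemma take_upd_ge: "n \<le> i \<Longrightarrow> take n (xs[i:=v]) = take n xs"
  by (rule nth_equalityI) (auto simp: nth_list_update)

lemma mat_lin_right: "x \<in> carrier_mat 3 3 \<Longrightarrow> y \<in> carrier_mat 3 3 \<Longrightarrow> (z::'r::comm_ring_1 mat) \<in> carrier_mat 3 3 \<Longrightarrow>
   (r \<cdot>\<^sub>m x + s \<cdot>\<^sub>m y) * z = r \<cdot>\<^sub>m (x * z) + s \<cdot>\<^sub>m (y * z)"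
  by (subst add_mult_distrib_mat[of _ 3 3]) (auto simp: mult_smult_assoc_mat[of _ 3 3 _ 3])
lemma mat_lin_left: "x \<in> carrier_mat 3 3 \<Longrightarrow> y \<in> carrier_mat 3 3 \<Longrightarrow> (z::'r::comm_ring_1 mat) \<in> carrier_mat 3 3 \<Longrightarrow>
   z * (r \<cdot>\<^sub>m x + s \<cdot>\<^sub>m y) = r \<cdot>\<^sub>m (z * x) + s \<cdot>\<^sub>m (z * y)"
  by (subst mult_add_distrib_mat[of _ 3 3]) (auto simp: mult_smult_distrib[of _ 3 3 _ 3])

lemma face_mlin:
  assumes f: "cochain (S4::'r::comm_ring_1 mat set) n f"
  shows "mlin (Suc n) (\<lambda>xs c. kap c (face n j f xs))"
  unfolding mlin_def
proof (intro ballI allI impI)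
  fix xs :: "'r mat list" and i :: nat and x y :: "'r mat" and r s :: 'r and c :: nat
  assume xs: "xs \<in> tuples S4 (Suc n)" and i: "i < Suc n" and x: "x\<in>S4" and y: "y \<in> S4" and c: "c<6"
  define w where "w = r \<cdot>\<^sub>m x + s \<cdot>\<^sub>m y"
  have w: "w \<in> S4" unfolding w_def using S4_lin[OF x y] .
  from f have fc: "\<forall>xs\<in>tuples S4 n. f xs \<in> carrier_mat 3 3" and fl: "mlin n (\<lambda>xs c. kap c (f xs))"
    by (auto simp: cochain_iff)
  have fl': "kap d (f (ys[p := r \<cdot>\<^sub>m x' + s \<cdot>\<^sub>m y'])) = r * kap d (f (ys[p:=x'])) + s * kap d (f (ys[p:=y']))"
    if "ys \<in> tuples S4 n" "p < n" "x' \<in> S4" "y' \<in> S4" "d < 6" for ys p x' y' d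
    using fl that unfolding mlin_def by blast
  have len: "length xs = Suc n" using tuples_len[OF xs] .
  have xc: "x \<in> carrier_mat 3 3" "y \<in> carrier_mat 3 3" using x y S4_carrier by auto
  have nth: "\<And>k. k < Suc n \<Longrightarrow> xs!k \<in> S4" using tuples_nth[OF xs] .
  consider "j = 0" "i = 0" | "j = 0" "i > 0" | "j \<noteq> 0" "j \<le> n" | "\<not> j \<le> n" "j \<noteq> 0" "i < n" | "\<not> j \<le> n" "j \<noteq> 0" "i = n"
    using i by linarith
  then show "kap c (face n j f (xs[i := r \<cdot>\<^sub>m x + s \<cdot>\<^sub>m y])) = r * kap c (face n j f (xs[i:=x])) + s * kap c (face n j f (xs[i:=y]))"
  proof cases
    case 1
    have d: "drop 1 xs \<in> tuples S4 n" using tuples_drop1[OF xs] .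
    have F: "f (drop (Suc 0) xs) \<in> carrier_mat 3 3" using fc d by simp
    have e: "\<And>v. face n j f (xs[i:=v]) = v * f (drop (Suc 0) xs)"
      using 1 len by (simp add: face_def drop1_upd0)
    show ?thesis unfolding e using c xc F
      by (simp add: kap_Lmult[OF S4_lin[OF x y] F c] kap_Lmult[OF x F c] kap_Lmult[OF y F c] Lop_lin_mat)
  next
    case 2
    define ys where "ys = drop (Suc 0) xs"
    define p where "p = i - 1"
    have pn: "p < n" using 2 i p_def by linarith
    have d: "ys \<in> tuples S4 n" using tuples_drop1[OF xs] ys_def by simp
    have e: "\<And>v. face n j f (xs[i:=v]) = xs!0 * f (ys[p:=v])"
      using 2 len by (simp add: face_def drop1_upd ys_def p_def)
    have Fc: "\<And>v. v \<in> S4 \<Longrightarrow> f (ys[p:=v]) \<in> carrier_mat 3 3" using fc tuples_upd[OF d] by blast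
    have x0: "xs!0 \<in> S4" using nth by simp
    have "kap c (xs!0 * f (ys[p:=w])) = Lop (xs!0) c (\<lambda>d. kap d (f (ys[p:=w])))"
      by (rule kap_Lmult[OF nth Fc[OF w] c]) simp
    also have "\<dots> = Lop (xs!0) c (\<lambda>d. r * kap d (f (ys[p:=x])) + s * kap d (f (ys[p:=y])))"
      by (rule Lop_cong[OF _ c]) (use fl'[OF d pn x y] in \<open>auto simp: w_def\<close>)
    also have "\<dots> = r * kap c (xs!0 * f (ys[p:=x])) + s * kap c (xs!0 * f (ys[p:=y]))"
      by (simp add: Lop_lin_k kap_Lmult[OF x0 Fc[OF x] c] kap_Lmult[OF x0 Fc[OF y] c])
    finally show ?thesis unfolding e w_def .
  next
    case 3
    define a where "a = j - 1"
    have a: "a < n" "Suc a < length xs" using 3 len a_def by auto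
    define ms where "ms = mrg a xs"
    have ms: "ms \<in> tuples S4 n" using tuples_mrg[OF xs a(1)] ms_def by simp
    have e: "\<And>v. face n j f (xs[i:=v]) = f (mrg a (xs[i:=v]))"
      using 3 by (simp add: face_def a_def)
    consider "i < a" | "i = a" | "i = Suc a" | "Suc a < i" by linarith
    then show ?thesis
    proof cases
      case 1
      then show ?thesis unfolding e using fl'[OF ms _ x y c] a 1
        by (simp add: mrg_upd_lt ms_def)
    next
      case 2
      have z: "xs!(Suc a) \<in> S4" using nth a by auto
      have "f (mrg a (xs[i:=w])) = f (ms[a := r \<cdot>\<^sub>m (x * xs!(Suc a)) + s \<cdot>\<^sub>m (y * xs!(Suc a))])"
        using 2 a xc S4_carrier[OF z] by (simp add: mrg_upd_eq ms_def w_def mat_lin_right)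
      then show ?thesis unfolding e w_def using fl'[OF ms a(1) S4_mult_closed[OF x z] S4_mult_closed[OF y z] c] 2 a
        by (simp add: mrg_upd_eq ms_def)
    next
      case 3
      have z: "xs!a \<in> S4" using nth a by auto
      have "f (mrg a (xs[i:=w])) = f (ms[a := r \<cdot>\<^sub>m (xs!a * x) + s \<cdot>\<^sub>m (xs!a * y)])"
        using 3 a xc S4_carrier[OF z] by (simp add: mrg_upd_suc ms_def w_def mat_lin_left)
      then show ?thesis unfolding e w_def using fl'[OF ms a(1) S4_mult_closed[OF z x] S4_mult_closed[OF z y] c] 3 a
        by (simp add: mrg_upd_suc ms_def)
    next
      case 4
      have "i - 1 < n" using 4 i by linarith
      then show ?thesis unfolding e using fl'[OF ms _ x y c] a 4 i len
        by (simp add: mrg_upd_gt ms_def)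
    qed
  next
    case 4
    define ys where "ys = take n xs"
    have d: "ys \<in> tuples S4 n" using tuples_take[OF xs] ys_def by simp
    have e: "\<And>v. face n j f (xs[i:=v]) = f (ys[i:=v]) * xs!n"
      using 4 len by (simp add: face_def take_upd_lt ys_def)
    have Fc: "\<And>v. v \<in> S4 \<Longrightarrow> f (ys[i:=v]) \<in> carrier_mat 3 3" using fc tuples_upd[OF d] by blast
    have xn: "xs!n \<in> S4" using nth by simp
    have "kap c (f (ys[i:=w]) * xs!n) = Rop (xs!n) c (\<lambda>d. kap d (f (ys[i:=w])))"
      by (rule kap_Rmult[OF xn Fc[OF w] c])
    also have "\<dots> = Rop (xs!n) c (\<lambda>d. r * kap d (f (ys[i:=x])) + s * kap d (f (ys[i:=y])))"
      by (rule Rop_cong[OF _ c]) (use fl'[OF d _ x y] 4 in \<open>auto simp: w_def\<close>)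
    also have "\<dots> = r * kap c (f (ys[i:=x]) * xs!n) + s * kap c (f (ys[i:=y]) * xs!n)"
      by (simp add: Rop_lin_k kap_Rmult[OF xn Fc[OF x] c] kap_Rmult[OF xn Fc[OF y] c])
    finally show ?thesis unfolding e w_def .
  next
    case 5
    have t: "take n xs \<in> tuples S4 n" using tuples_take[OF xs] .
    have F: "f (take n xs) \<in> carrier_mat 3 3" using fc t by simp
    have e: "\<And>v. face n j f (xs[i:=v]) = f (take n xs) * v"
      using 5 len by (simp add: face_def take_upd_ge)
    show ?thesis unfolding e using c xc F
      by (simp add: kap_Rmult[OF S4_lin[OF x y] F c] kap_Rmult[OF x F c] kap_Rmult[OF y F c] Rop_lin_mat)
  qed
qed

lemma hdiff_cochain:
  assumes f: "cochain (S4::'r::comm_ring_1 mat set) n f"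
  shows "cochain S4 (Suc n) (hdiff n f)"
  unfolding cochain_iff
proof
  show "\<forall>xs\<in>tuples S4 (Suc n). hdiff n f xs \<in> carrier_mat 3 3" by simp
  have "mlin (Suc n) (\<lambda>xs c. \<Sum>j\<in>{..Suc n}. (-1)^j * kap c (face n j f xs))"
    by (rule mlin_sum) (auto intro: face_mlin[OF f])
  then show "mlin (Suc n) (\<lambda>xs c. kap c (hdiff n f xs))"
    by (rule mlin_cong) (simp add: kap_hdiff)
qed

lemma cochain_comb:
  assumes f: "cochain (S4::'r::comm_ring_1 mat set) n f" and g: "cochain S4 n g"
  shows "cochain S4 n (\<lambda>xs. f xs + t \<cdot>\<^sub>m g xs)"
proof -
  have fc: "\<forall>xs\<in>tuples S4 n. f xs \<in> carrier_mat 3 3" and fl: "mlin n (\<lambda>xs c. kap c (f xs))"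
    and gc: "\<forall>xs\<in>tuples S4 n. g xs \<in> carrier_mat 3 3" and gl: "mlin n (\<lambda>xs c. kap c (g xs))"
    using f g by (auto simp: cochain_iff)
  have "mlin n (\<lambda>xs c. kap c (f xs) + t * kap c (g xs))" by (rule mlin_add[OF fl gl])
  then have "mlin n (\<lambda>xs c. kap c (f xs + t \<cdot>\<^sub>m g xs))"
    by (rule mlin_cong) (use fc gc in \<open>simp add: kap_add kap_smult\<close>)
  then show ?thesis unfolding cochain_iff using fc gc by auto
qed

lemma face_lin:
  assumes fc: "\<forall>ys\<in>tuples S4 n. f ys \<in> carrier_mat 3 3" and gc: "\<forall>ys\<in>tuples S4 n. g ys \<in> carrier_mat 3 3"
    and xs: "xs \<in> tuples (S4::'r::comm_ring_1 mat set) (Suc n)" and c: "c < 6"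
  shows "kap c (face n j (\<lambda>ys. f ys + t \<cdot>\<^sub>m g ys) xs) = kap c (face n j f xs) + t * kap c (face n j g xs)"
proof -
  consider "j = 0" | "j \<noteq> 0" "j \<le> n" | "\<not> j \<le> n" "j \<noteq> 0" by linarith
  then show ?thesis
  proof cases
    case 1
    have d: "drop 1 xs \<in> tuples S4 n" using tuples_drop1[OF xs] .
    have F: "f (drop 1 xs) \<in> carrier_mat 3 3" "g (drop 1 xs) \<in> carrier_mat 3 3" using fc gc d by auto
    have x0: "xs!0 \<in> S4" using tuples_nth[OF xs] by simp
    have "kap c (xs!0 * (f (drop 1 xs) + t \<cdot>\<^sub>m g (drop 1 xs))) = Lop (xs!0) c (\<lambda>d. kap d (f (drop 1 xs) + t \<cdot>\<^sub>m g (drop 1 xs)))"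
      by (rule kap_Lmult[OF x0 _ c]) (use F in simp)
    also have "\<dots> = Lop (xs!0) c (\<lambda>d. 1 * kap d (f (drop 1 xs)) + t * kap d (g (drop 1 xs)))"
      using F by (simp add: kap_add kap_smult)
    also have "\<dots> = kap c (xs!0 * f (drop 1 xs)) + t * kap c (xs!0 * g (drop 1 xs))"
      by (simp only: Lop_lin_k kap_Lmult[OF x0 F(1) c] kap_Lmult[OF x0 F(2) c]) simp
    finally show ?thesis using 1 by (simp add: face_def)
  next
    case 2
    have "mrg (j-1) xs \<in> tuples S4 n" using tuples_mrg[OF xs] 2 by simp
    then show ?thesis using 2 fc gc by (simp add: face_def kap_add kap_smult)
  next
    case 3
    have d: "take n xs \<in> tuples S4 n" using tuples_take[OF xs] .
    have F: "f (take n xs) \<in> carrier_mat 3 3" "g (take n xs) \<in> carrier_mat 3 3" using fc gc d by auto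
    have xn: "xs!n \<in> S4" using tuples_nth[OF xs] by simp
    have "kap c ((f (take n xs) + t \<cdot>\<^sub>m g (take n xs)) * xs!n) = Rop (xs!n) c (\<lambda>d. kap d (f (take n xs) + t \<cdot>\<^sub>m g (take n xs)))"
      by (rule kap_Rmult[OF xn _ c]) (use F in simp)
    also have "\<dots> = Rop (xs!n) c (\<lambda>d. 1 * kap d (f (take n xs)) + t * kap d (g (take n xs)))"
      using F by (simp add: kap_add kap_smult)
    also have "\<dots> = kap c (f (take n xs) * xs!n) + t * kap c (g (take n xs) * xs!n)"
      by (simp only: Rop_lin_k kap_Rmult[OF xn F(1) c] kap_Rmult[OF xn F(2) c]) simp
    finally show ?thesis using 3 by (simp add: face_def)
  qed
qed

lemma hdiff_lin:
  assumes fc: "\<forall>ys\<in>tuples S4 n. f ys \<in> carrier_mat 3 3" and gc: "\<forall>ys\<in>tuples S4 n. g ys \<in> carrier_mat 3 3"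
    and xs: "xs \<in> tuples (S4::'r::comm_ring_1 mat set) (Suc n)" and c: "c < 6"
  shows "kap c (hdiff n (\<lambda>ys. f ys + t \<cdot>\<^sub>m g ys) xs) = kap c (hdiff n f xs) + t * kap c (hdiff n g xs)"
  by (simp add: kap_hdiff face_lin[OF fc gc xs c] sum.distrib sum_distrib_left algebra_simps)


definition vz :: "nat \<Rightarrow> nat \<Rightarrow> ('r::comm_ring_1 mat list \<Rightarrow> 'r mat) \<Rightarrow> bool" where
  "vz K n f \<longleftrightarrow> (\<forall>ys\<in>tuples S4 n. \<forall>p. p < K \<longrightarrow> p < n \<longrightarrow> ys!p = 1\<^sub>m 3 \<longrightarrow> (\<forall>c<6. kap c (f ys) = 0))"

definition cz :: "nat \<Rightarrow> ('r::comm_ring_1 mat list \<Rightarrow> 'r mat) \<Rightarrow> bool" where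
  "cz n f \<longleftrightarrow> (\<forall>xs\<in>tuples S4 (Suc n). \<forall>c<6. kap c (hdiff n f xs) = 0)"

lemma kap_Lmult0: "x \<in> S4 \<Longrightarrow> m \<in> carrier_mat 3 3 \<Longrightarrow> c < 6 \<Longrightarrow> (\<And>d. d < 6 \<Longrightarrow> kap d m = 0) \<Longrightarrow> kap c (x * m) = 0"
  by (simp add: kap_Lmult Lop_def)
lemma kap_Rmult0: "x \<in> S4 \<Longrightarrow> m \<in> carrier_mat 3 3 \<Longrightarrow> c < 6 \<Longrightarrow> (\<And>d. d < 6 \<Longrightarrow> kap d m = 0) \<Longrightarrow> kap c (m * x) = 0"
  by (simp add: kap_Rmult Rop_def)

lemma alt_pair:
  fixes a :: "nat \<Rightarrow> 'a::comm_ring_1"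
  assumes "j < N" "\<And>i. i \<le> N \<Longrightarrow> i \<noteq> j \<Longrightarrow> i \<noteq> Suc j \<Longrightarrow> a i = 0" "a j = a (Suc j)"
  shows "(\<Sum>i\<le>N. (-1)^i * a i) = 0"
proof -
  have "(\<Sum>i\<le>N. (-1)^i * a i) = (\<Sum>i\<in>{j, Suc j}. (-1)^i * a i)"
    by (rule sum.mono_neutral_right) (use assms in auto)
  then show ?thesis using assms(3) by simp
qed

lemma sum_split_at: "k \<le> N \<Longrightarrow> (\<Sum>i\<le>N. g i) = (\<Sum>i\<le>k. g i) + (\<Sum>i\<in>{Suc k..N}. (g i::'a::comm_monoid_add))"
proof -
  assume "k \<le> N"
  then have "{..N} = {..k} \<union> {Suc k..N}" by auto
  then show ?thesis by (simp add: sum.union_disjoint)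
qed

lemma mrg_unit_eq:
  assumes "u!j = 1\<^sub>m 3" "1 \<le> j" "Suc j < length u" "u!(j-1) \<in> carrier_mat 3 3" "u!(Suc j) \<in> carrier_mat 3 3"
  shows "mrg (j-1) u = mrg j (u::'r::comm_ring_1 mat list)"
  using assms by (intro nth_equalityI) (auto simp: nth_mrg right_mult_one_mat[of _ 3 3] left_mult_one_mat[of _ 3 3])

lemma mrg0_unit:
  assumes "u!0 = 1\<^sub>m 3" "Suc 0 < length u" "u!1 \<in> carrier_mat 3 3"
  shows "mrg 0 u = drop (Suc 0) (u::'r::comm_ring_1 mat list)"
  using assms by (intro nth_equalityI) (auto simp: nth_mrg left_mult_one_mat[of _ 3 3])

lemma mrg_last_unit:
  assumes "length u = Suc m" "1 \<le> m" "u!m = 1\<^sub>m 3" "u!(m-1) \<in> carrier_mat 3 3"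
  shows "mrg (m-1) u = take m (u::'r::comm_ring_1 mat list)"
  using assms by (intro nth_equalityI) (auto simp: nth_mrg right_mult_one_mat[of _ 3 3])

lemma vanish_d:
  assumes hc: "\<forall>ys\<in>tuples S4 m. h ys \<in> carrier_mat 3 3" and hv: "vz K m h" and K: "K \<le> Suc m"
    and u: "u \<in> tuples (S4::'r::comm_ring_1 mat set) (Suc m)" and j: "j < K" "u!j = 1\<^sub>m 3" and c: "c < 6"
  shows "kap c (hdiff m h u) = 0"
proof -
  have len: "length u = Suc m" using tuples_len[OF u] .
  have uc: "\<And>k. k < Suc m \<Longrightarrow> u!k \<in> carrier_mat 3 3" using tuples_nthc[OF u] .
  have us: "\<And>k. k < Suc m \<Longrightarrow> u!k \<in> S4" using tuples_nth[OF u] .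
  have jm: "j \<le> m" using j K by linarith
  have hvz: "\<And>ys p d. ys \<in> tuples S4 m \<Longrightarrow> p < K \<Longrightarrow> p < m \<Longrightarrow> ys!p = 1\<^sub>m 3 \<Longrightarrow> d < 6 \<Longrightarrow> kap d (h ys) = 0"
    using hv unfolding vz_def by blast
  have hc': "\<And>ys. ys \<in> tuples S4 m \<Longrightarrow> h ys \<in> carrier_mat 3 3" using hc by blast
  show ?thesis unfolding kap_hdiff
  proof (rule alt_pair[where j=j])
    show "j < Suc m" using jm by simp
  next
    fix i assume i: "i \<le> Suc m" "i \<noteq> j" "i \<noteq> Suc j"
    consider "i = 0" | "i \<noteq> 0" "i \<le> m" | "i = Suc m" using i by linarith
    then show "kap c (face m i h u) = 0"
    proof cases
      case 1
      have d: "drop 1 u \<in> tuples S4 m" using tuples_drop1[OF u] .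
      have "(drop 1 u)!(j-1) = 1\<^sub>m 3" using j 1 i len jm by simp
      then have "\<And>d. d < 6 \<Longrightarrow> kap d (h (drop 1 u)) = 0"
        using hvz[OF d, of "j-1"] j 1 i jm by simp
      then show ?thesis using 1 kap_Lmult0[OF us[of 0] hc'[OF d] c] by (simp add: face_def)
    next
      case 2
      have t: "mrg (i-1) u \<in> tuples S4 m" using tuples_mrg[OF u] 2 by simp
      have "\<And>d. d < 6 \<Longrightarrow> kap d (h (mrg (i-1) u)) = 0"
      proof -
        fix d :: nat assume d: "d < 6"
        show "kap d (h (mrg (i-1) u)) = 0"
        proof (cases "i < j")
          case True
          have ij: "i - 1 < j - 1" "Suc (j - 1) = j" using True 2 by linarith+
          have "(mrg (i-1) u)!(j-1) = 1\<^sub>m 3" using True 2 j len jm ij by (simp add: nth_mrg)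
          then show ?thesis using hvz[OF t, of "j-1" d] True j jm d by simp
        next
          case False
          then have "Suc j < i" using i by linarith
          then have ji: "j < i - Suc 0" by linarith
          then have "(mrg (i-1) u)!j = 1\<^sub>m 3" using 2 j len by (simp add: nth_mrg)
          then show ?thesis using hvz[OF t, of j d] \<open>Suc j < i\<close> 2 j d by simp
        qed
      qed
      then show ?thesis using 2 c by (simp add: face_def)
    next
      case 3
      have t: "take m u \<in> tuples S4 m" using tuples_take[OF u] .
      have jm': "j < m" using 3 i jm by linarith
      have "\<And>d. d < 6 \<Longrightarrow> kap d (h (take m u)) = 0"
        using hvz[OF t, of j] jm' j by simp
      then show ?thesis using 3 kap_Rmult0[OF us[of m] hc'[OF t] c] by (simp add: face_def)
    qed
  next
    have "face m j h u = face m (Suc j) h u"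
    proof (cases "j = 0")
      case True
      have d: "drop (Suc 0) u \<in> tuples S4 m" using tuples_drop1[OF u] by simp
      have e0: "face m j h u = h (drop (Suc 0) u)"
        using True j by (simp add: face_def left_mult_one_mat[OF hc'[OF d]])
      show ?thesis
      proof (cases "m = 0")
        case True
        then have "drop (Suc 0) u = take m u" using len by simp
        then show ?thesis using e0 \<open>j = 0\<close> True j hc'[OF d] by (simp add: face_def right_mult_one_mat[of _ 3 3])
      next
        case False
        then show ?thesis using e0 \<open>j = 0\<close> mrg0_unit[of u] j len uc[of 1] by (simp add: face_def)
      qed
    next
      case False
      show ?thesis
      proof (cases "Suc j \<le> m")
        case True
        have "mrg (j-1) u = mrg j u" by (rule mrg_unit_eq) (use False True j len uc in auto)
        then show ?thesis using False True by (simp add: face_def)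
      next
        case nj: False
        then have jeq: "j = m" using jm by simp
        have t: "take m u \<in> tuples S4 m" using tuples_take[OF u] .
        have "mrg (m-1) u = take m u" by (rule mrg_last_unit) (use False jeq j len uc in auto)
        then show ?thesis using False jeq j hc'[OF t] by (simp add: face_def right_mult_one_mat[of _ 3 3])
      qed
    qed
    then show "kap c (face m j h u) = kap c (face m (Suc j) h u)" by simp
  qed
qed

definition ins :: "nat \<Rightarrow> 'a \<Rightarrow> 'a list \<Rightarrow> 'a list" where "ins k v as = take k as @ v # drop k as"

lemma length_ins[simp]: "k \<le> length as \<Longrightarrow> length (ins k v as) = Suc (length as)"
  by (simp add: ins_def)
lemma nth_ins: "k \<le> length as \<Longrightarrow> p \<le> length as \<Longrightarrow> (ins k v as)!p = (if p < k then as!p else if p = k then v else as!(p-1))"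
  by (auto simp: ins_def nth_append min_def)
lemma tuples_ins: "as \<in> tuples A m \<Longrightarrow> k \<le> m \<Longrightarrow> v \<in> A \<Longrightarrow> ins k v as \<in> tuples A (Suc m)"
  unfolding tuples_def ins_def by (auto dest: in_set_takeD in_set_dropD)
lemma ins_upd: "k \<le> length as \<Longrightarrow> i < length as \<Longrightarrow> ins k v (as[i:=w]) = (ins k v as)[(if i < k then i else Suc i) := w]"
  by (rule nth_equalityI) (auto simp: nth_ins nth_list_update)
lemma ins_R2a: "1 \<le> k \<Longrightarrow> k \<le> length b \<Longrightarrow> b!(k-1) \<in> carrier_mat 3 3 \<Longrightarrow> mrg (k-1) (ins k (1\<^sub>m 3) b) = (b::'r::comm_ring_1 mat list)"
  by (rule nth_equalityI) (auto simp: nth_mrg nth_ins right_mult_one_mat[of _ 3 3])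
lemma ins_R2b: "k < length b \<Longrightarrow> b!k \<in> carrier_mat 3 3 \<Longrightarrow> mrg k (ins k (1\<^sub>m 3) b) = (b::'r::comm_ring_1 mat list)"
  by (rule nth_equalityI) (auto simp: nth_mrg nth_ins left_mult_one_mat[of _ 3 3])
lemma ins_R3: "k < q \<Longrightarrow> q < length b \<Longrightarrow> mrg q (ins k v b) = ins k v (mrg (q-1) b)"
  by (rule nth_equalityI) (auto simp: nth_mrg nth_ins)
lemma ins_R4: "k \<le> m \<Longrightarrow> length b = Suc m \<Longrightarrow> take (Suc m) (ins k v b) = ins k v (take m b)"
  by (rule nth_equalityI) (auto simp: nth_ins)
lemma ins_R4n: "k \<le> m \<Longrightarrow> length b = Suc m \<Longrightarrow> (ins k v b)!(Suc m) = b!m"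
  by (simp add: nth_ins)
lemma ins_P1: "as \<noteq> [] \<Longrightarrow> as!0 = v \<Longrightarrow> ins 0 v (drop 1 as) = as"
  by (cases as) (auto simp: ins_def)
lemma ins_P2: "1 \<le> k \<Longrightarrow> k < length a \<Longrightarrow> a!k = 1\<^sub>m 3 \<Longrightarrow> a!(k-1) \<in> carrier_mat 3 3 \<Longrightarrow>
   ins k (1\<^sub>m 3) (mrg (k-1) a) = (a::'r::comm_ring_1 mat list)"
  by (rule nth_equalityI) (auto simp: nth_mrg nth_ins right_mult_one_mat[of _ 3 3])


context
  fixes z :: "'r::comm_ring_1 mat list \<Rightarrow> 'r mat" and m k :: nat
  assumes z: "cochain S4 (Suc m) z" and zc: "cz (Suc m) z" and zv: "vz k (Suc m) z" and k: "k < Suc m"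
begin

definition hh :: "'r mat list \<Rightarrow> 'r mat" where "hh as = z (ins k (1\<^sub>m 3) as)"

lemma zc1: "\<forall>xs\<in>tuples S4 (Suc m). z xs \<in> carrier_mat 3 3" and zl: "mlin (Suc m) (\<lambda>xs c. kap c (z xs))"
  using z by (auto simp: cochain_iff)

lemma zvz: "ys \<in> tuples S4 (Suc m) \<Longrightarrow> p < k \<Longrightarrow> ys!p = 1\<^sub>m 3 \<Longrightarrow> d < 6 \<Longrightarrow> kap d (z ys) = 0"
  using zv k unfolding vz_def by auto

lemma hh_cochain: "cochain S4 m hh"
  unfolding cochain_iff
proof
  show "\<forall>xs\<in>tuples S4 m. hh xs \<in> carrier_mat 3 3"
    using zc1 tuples_ins[of _ S4 m k] k S4_one unfolding hh_def by auto
  show "mlin m (\<lambda>xs c. kap c (hh xs))" unfolding mlin_def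
  proof (intro ballI allI impI)
    fix as :: "'r mat list" and i :: nat and x y :: "'r mat" and r s :: 'r and c :: nat
    assume as: "as \<in> tuples S4 m" and i: "i < m" and x: "x \<in> S4" and y: "y \<in> S4" and c: "c < 6"
    have C: "ins k (1\<^sub>m 3) as \<in> tuples S4 (Suc m)" using tuples_ins[OF as _ S4_one] k by simp
    have len: "length as = m" using tuples_len[OF as] .
    have e: "\<And>w. ins k (1\<^sub>m 3) (as[i:=w]) = (ins k (1\<^sub>m 3) as)[(if i < k then i else Suc i) := w]"
      using len k i by (simp add: ins_upd)
    have "(if i < k then i else Suc i) < Suc m" using i by auto
    then show "kap c (hh (as[i := r \<cdot>\<^sub>m x + s \<cdot>\<^sub>m y])) = r * kap c (hh (as[i:=x])) + s * kap c (hh (as[i:=y]))"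
      unfolding hh_def e using zl C x y c unfolding mlin_def by blast
  qed
qed

lemma hh_c: "\<forall>ys\<in>tuples S4 m. hh ys \<in> carrier_mat 3 3"
  using hh_cochain by (simp add: cochain_iff)

lemma hh_vz: "vz k m hh"
  unfolding vz_def
proof (intro ballI allI impI)
  fix ys :: "'r mat list" and p c :: nat assume ys: "ys \<in> tuples S4 m" and p: "p < k" "p < m" "ys!p = 1\<^sub>m 3" and c: "c < 6"
  have C: "ins k (1\<^sub>m 3) ys \<in> tuples S4 (Suc m)" using tuples_ins[OF ys _ S4_one] k by simp
  have len: "length ys = m" using tuples_len[OF ys] .
  have "(ins k (1\<^sub>m 3) ys)!p = 1\<^sub>m 3" using len p k by (simp add: nth_ins)
  then show "kap c (hh ys) = 0" using zvz[OF C p(1) _ c] unfolding hh_def by simp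
qed

lemma key_sum:
  assumes b: "b \<in> tuples S4 (Suc m)" and c: "c < 6"
  shows "kap c (hdiff m hh b) = (\<Sum>i\<le>k. (-1)^i * kap c (face m i hh b))"
proof -
  define C where "C = ins k (1\<^sub>m 3) b"
  have lenb: "length b = Suc m" using tuples_len[OF b] .
  have Ct: "C \<in> tuples S4 (Suc (Suc m))" unfolding C_def using tuples_ins[OF b _ S4_one] k by simp
  have lenC: "length C = Suc (Suc m)" using tuples_len[OF Ct] .
  have bc: "\<And>i. i < Suc m \<Longrightarrow> b!i \<in> carrier_mat 3 3" using tuples_nthc[OF b] .
  have Cs: "\<And>i. i < Suc (Suc m) \<Longrightarrow> C!i \<in> S4" using tuples_nth[OF Ct] .
  have Ck: "C!k = 1\<^sub>m 3" unfolding C_def using lenb k by (simp add: nth_ins)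
  define A where "A i = kap c (face (Suc m) i z C)" for i
  define B where "B i = kap c (face m i hh b)" for i
  have F1: "A i = 0" if i: "i < k" for i
  proof (cases "i = 0")
    case True
    have d: "drop 1 C \<in> tuples S4 (Suc m)" using tuples_drop1[OF Ct] .
    have "(drop 1 C)!(k-1) = 1\<^sub>m 3" using Ck i True lenC k by simp
    then have "\<And>d. d < 6 \<Longrightarrow> kap d (z (drop 1 C)) = 0" using zvz[OF d, of "k-1"] i True by simp
    then show ?thesis unfolding A_def using True kap_Lmult0[OF Cs[of 0] _ c] zc1 d by (simp add: face_def)
  next
    case False
    have t: "mrg (i-1) C \<in> tuples S4 (Suc m)" using tuples_mrg[OF Ct, of "i-1"] i k False by simp
    have ik: "i - 1 < k - 1" "Suc (k - 1) = k" using i False by linarith+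
    have "(mrg (i-1) C)!(k-1) = 1\<^sub>m 3" using Ck ik lenC k by (simp add: nth_mrg)
    then have "kap c (z (mrg (i-1) C)) = 0" using zvz[OF t, of "k-1" c] i c ik by simp
    then show ?thesis unfolding A_def using False i k by (simp add: face_def)
  qed
  have F2: "A k = A (Suc k)"
  proof -
    have e1: "face (Suc m) k z C = z b"
    proof (cases "k = 0")
      case True
      have "C!0 = 1\<^sub>m 3" "drop 1 C = b" using True unfolding C_def by (simp_all add: ins_def)
      then show ?thesis using True zc1 b by (simp add: face_def left_mult_one_mat[of _ 3 3])
    next
      case False
      have "mrg (k-1) C = b" unfolding C_def by (rule ins_R2a) (use False k lenb bc in auto)
      then show ?thesis using False k by (simp add: face_def)
    qed
    have e2: "face (Suc m) (Suc k) z C = z b"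
    proof -
      have "mrg k C = b" unfolding C_def by (rule ins_R2b) (use k lenb bc in auto)
      then show ?thesis using k by (simp add: face_def)
    qed
    show ?thesis unfolding A_def e1 e2 ..
  qed
  have F3: "A i = B (i - 1)" if i: "Suc k < i" "i \<le> Suc (Suc m)" for i
  proof (cases "i \<le> Suc m")
    case True
    have "mrg (i-1) C = ins k (1\<^sub>m 3) (mrg (i-1-1) b)" unfolding C_def
      by (rule ins_R3) (use i True lenb in auto)
    moreover have "i - Suc 0 \<le> m" using True i by linarith
    ultimately show ?thesis unfolding A_def B_def using i True by (simp add: face_def hh_def)
  next
    case False
    then have ii: "i = Suc (Suc m)" using i by simp
    have "take (Suc m) C = ins k (1\<^sub>m 3) (take m b)" "C!(Suc m) = b!m"
      unfolding C_def using k lenb by (auto simp: ins_R4 ins_R4n)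
    then show ?thesis unfolding A_def B_def using ii by (simp add: face_def hh_def)
  qed
  have S0: "(\<Sum>i\<le>Suc (Suc m). (-1)^i * A i) = 0"
    using zc Ct c unfolding cz_def A_def kap_hdiff by blast
  have S1: "(\<Sum>i\<le>Suc k. (-1)^i * A i) = 0"
  proof -
    have "(\<Sum>i\<le>Suc k. (-1)^i * A i) = (\<Sum>i<k. (-1)^i * A i) + (-1)^k * A k + (-1)^(Suc k) * A (Suc k)"
      by (simp add: lessThan_Suc_atMost[symmetric])
    also have "(\<Sum>i<k. (-1)^i * A i) = 0" using F1 by simp
    finally show ?thesis using F2 by simp
  qed
  have S2: "(\<Sum>i\<in>{Suc (Suc k)..Suc (Suc m)}. (-1)^i * A i) = - (\<Sum>i\<in>{Suc k..Suc m}. (-1)^i * B i)"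
  proof -
    have "(\<Sum>i\<in>{Suc (Suc k)..Suc (Suc m)}. (-1)^i * A i) = (\<Sum>i\<in>{Suc k..Suc m}. (-1)^(Suc i) * A (Suc i))"
      by (rule sum.shift_bounds_cl_Suc_ivl)
    also have "\<dots> = (\<Sum>i\<in>{Suc k..Suc m}. - ((-1)^i * B i))"
      by (intro sum.cong refl) (simp add: F3)
    finally show ?thesis by (simp add: sum_negf)
  qed
  have "(\<Sum>i\<le>Suc (Suc m). (-1)^i * A i) = (\<Sum>i\<le>Suc k. (-1)^i * A i) + (\<Sum>i\<in>{Suc (Suc k)..Suc (Suc m)}. (-1)^i * A i)"
    by (rule sum_split_at) (use k in simp)
  then have T: "(\<Sum>i\<in>{Suc k..Suc m}. (-1)^i * B i) = 0" using S0 S1 S2 by simp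
  have "kap c (hdiff m hh b) = (\<Sum>i\<le>Suc m. (-1)^i * B i)" unfolding B_def kap_hdiff ..
  also have "\<dots> = (\<Sum>i\<le>k. (-1)^i * B i) + (\<Sum>i\<in>{Suc k..Suc m}. (-1)^i * B i)"
    by (rule sum_split_at) (use k in simp)
  finally show ?thesis using T unfolding B_def by simp
qed

lemma key_at:
  assumes a: "a \<in> tuples S4 (Suc m)" and ak: "a!k = 1\<^sub>m 3" and c: "c < 6"
  shows "kap c (hdiff m hh a) = (-1)^k * kap c (z a)"
proof -
  have lena: "length a = Suc m" using tuples_len[OF a] .
  have ac: "\<And>i. i < Suc m \<Longrightarrow> a!i \<in> carrier_mat 3 3" using tuples_nthc[OF a] .
  have as: "\<And>i. i < Suc m \<Longrightarrow> a!i \<in> S4" using tuples_nth[OF a] .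
  have hv: "\<And>ys p d. ys \<in> tuples S4 m \<Longrightarrow> p < k \<Longrightarrow> p < m \<Longrightarrow> ys!p = 1\<^sub>m 3 \<Longrightarrow> d < 6 \<Longrightarrow> kap d (hh ys) = 0"
    using hh_vz unfolding vz_def by blast
  have Z: "kap c (face m i hh a) = 0" if i: "i < k" for i
  proof (cases "i = 0")
    case True
    have d: "drop 1 a \<in> tuples S4 m" using tuples_drop1[OF a] .
    have "(drop 1 a)!(k-1) = 1\<^sub>m 3" using ak i True lena k by simp
    then have "\<And>d. d < 6 \<Longrightarrow> kap d (hh (drop 1 a)) = 0" using hv[OF d, of "k-1"] i True k by simp
    then show ?thesis using True kap_Lmult0[OF as[of 0] _ c] hh_c d by (simp add: face_def)
  next
    case False
    have t: "mrg (i-1) a \<in> tuples S4 m" using tuples_mrg[OF a, of "i-1"] i k False by simp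
    have ik: "i - 1 < k - 1" "Suc (k - 1) = k" using i False by linarith+
    have "(mrg (i-1) a)!(k-1) = 1\<^sub>m 3" using ak ik lena k by (simp add: nth_mrg)
    then have "kap c (hh (mrg (i-1) a)) = 0" using hv[OF t, of "k-1" c] i c ik k by simp
    then show ?thesis using False i k by (simp add: face_def)
  qed
  have E: "face m k hh a = z a"
  proof (cases "k = 0")
    case True
    have "ins 0 (1\<^sub>m 3) (drop 1 a) = a" by (rule ins_P1) (use True ak lena in auto)
    then show ?thesis using True ak zc1 a unfolding hh_def by (simp add: face_def left_mult_one_mat[of _ 3 3])
  next
    case False
    have "ins k (1\<^sub>m 3) (mrg (k-1) a) = a" by (rule ins_P2) (use False ak lena k ac in auto)
    then show ?thesis using False k unfolding hh_def by (simp add: face_def)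
  qed
  have "kap c (hdiff m hh a) = (\<Sum>i\<le>k. (-1)^i * kap c (face m i hh a))" by (rule key_sum[OF a c])
  also have "\<dots> = (\<Sum>i<k. (-1)^i * kap c (face m i hh a)) + (-1)^k * kap c (face m k hh a)"
    by (simp add: lessThan_Suc_atMost[symmetric])
  also have "(\<Sum>i<k. (-1)^i * kap c (face m i hh a)) = 0" using Z by simp
  finally show ?thesis using E by simp
qed

lemma step_cz: "cz (Suc m) (\<lambda>xs. z xs + (- ((-1)^k)) \<cdot>\<^sub>m hdiff m hh xs)"
  unfolding cz_def
proof (intro ballI allI impI)
  fix xs :: "'r mat list" and c :: nat assume xs: "xs \<in> tuples S4 (Suc (Suc m))" and c: "c < 6"
  have "kap c (hdiff (Suc m) (\<lambda>xs. z xs + (- ((-1)^k)) \<cdot>\<^sub>m hdiff m hh xs) xs) = kap c (hdiff (Suc m) z xs) + (- ((-1)^k)) * kap c (hdiff (Suc m) (hdiff m hh) xs)"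
    by (rule hdiff_lin[OF zc1 _ xs c]) simp
  also have "\<dots> = 0" using zc xs c d2[OF hh_c xs] unfolding cz_def by simp
  finally show "kap c (hdiff (Suc m) (\<lambda>xs. z xs + (- ((-1)^k)) \<cdot>\<^sub>m hdiff m hh xs) xs) = 0" .
qed

lemma step_vz: "vz (Suc k) (Suc m) (\<lambda>xs. z xs + (- ((-1)^k)) \<cdot>\<^sub>m hdiff m hh xs)"
  unfolding vz_def
proof (intro ballI allI impI)
  fix a :: "'r mat list" and p c :: nat
  assume a: "a \<in> tuples S4 (Suc m)" and p: "p < Suc k" "p < Suc m" "a!p = 1\<^sub>m 3" and c: "c < 6"
  have zca: "z a \<in> carrier_mat 3 3" using zc1 a by blast
  have E: "kap c (z a + (- ((-1)^k)) \<cdot>\<^sub>m hdiff m hh a) = kap c (z a) + (- ((-1)^k)) * kap c (hdiff m hh a)"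
    using zca by (simp add: kap_add kap_smult)
  show "kap c (z a + (- ((-1)^k)) \<cdot>\<^sub>m hdiff m hh a) = 0"
  proof (cases "p < k")
    case True
    have "kap c (z a) = 0" using zvz[OF a True p(3) c] .
    moreover have "kap c (hdiff m hh a) = 0"
      by (rule vanish_d[OF hh_c hh_vz _ a True p(3) c]) (use k in simp)
    ultimately show ?thesis using E by simp
  next
    case False
    then have pk: "p = k" using p by simp
    have one: "((-1::'r)^k) * (-1)^k = 1" by (simp add: power_mult_distrib[symmetric])
    have "kap c (hdiff m hh a) = (-1)^k * kap c (z a)" using key_at[OF a _ c] p pk by simp
    then show ?thesis using E one by (simp add: mult.assoc[symmetric])
  qed
qed

end

lemma zero_cochain: "cochain (S4::'r::comm_ring_1 mat set) n (\<lambda>_. 0\<^sub>m 3 3)"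
  unfolding cochain_iff mlin_def by simp

lemma hdiff_zero:
  assumes xs: "xs \<in> tuples (S4::'r::comm_ring_1 mat set) (Suc m)" and c: "c < 6"
  shows "kap c (hdiff m (\<lambda>_. 0\<^sub>m 3 3) xs) = 0"
proof -
  have "kap c (face m i (\<lambda>_. 0\<^sub>m 3 3) xs) = 0" for i
  proof -
    have x0: "xs!0 \<in> S4" "xs!m \<in> S4" using tuples_nth[OF xs] by auto
    show ?thesis using kap_Lmult0[OF x0(1) _ c, of "0\<^sub>m 3 3"] kap_Rmult0[OF x0(2) _ c, of "0\<^sub>m 3 3"]
      by (simp add: face_def)
  qed
  then show ?thesis by (simp add: kap_hdiff)
qed

lemma normalize:
  assumes z: "cochain (S4::'r::comm_ring_1 mat set) (Suc m) z" and zc: "cz (Suc m) z"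
  shows "\<exists>z' g. cochain S4 (Suc m) z' \<and> cz (Suc m) z' \<and> vz (Suc m) (Suc m) z' \<and> cochain S4 m g \<and>
     (\<forall>xs\<in>tuples S4 (Suc m). \<forall>c<6. kap c (z xs) = kap c (z' xs) + kap c (hdiff m g xs))"
proof -
  have "k \<le> Suc m \<Longrightarrow> \<exists>z' g. cochain S4 (Suc m) z' \<and> cz (Suc m) z' \<and> vz k (Suc m) z' \<and> cochain S4 m g \<and>
     (\<forall>xs\<in>tuples S4 (Suc m). \<forall>c<6. kap c (z xs) = kap c (z' xs) + kap c (hdiff m g xs))" for k
  proof (induction k)
    case 0
    show ?case
      by (rule exI[of _ z], rule exI[of _ "\<lambda>_. 0\<^sub>m 3 3"]) (use z zc zero_cochain hdiff_zero in \<open>auto simp: vz_def\<close>)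
  next
    case (Suc k)
    then obtain z' g where z': "cochain S4 (Suc m) z'" "cz (Suc m) z'" "vz k (Suc m) z'" "cochain S4 m g"
      and E: "\<forall>xs\<in>tuples S4 (Suc m). \<forall>c<6. kap c (z xs) = kap c (z' xs) + kap c (hdiff m g xs)" by auto
    have k: "k < Suc m" using Suc.prems by simp
    define h where "h = hh z' k"
    define t :: 'r where "t = - ((-1)^k)"
    have hc: "cochain S4 m h" unfolding h_def by (rule hh_cochain[OF z'(1-3) k])
    have c1: "cochain S4 (Suc m) (\<lambda>xs. z' xs + t \<cdot>\<^sub>m hdiff m h xs)"
      by (rule cochain_comb[OF z'(1) hdiff_cochain[OF hc]])
    have c2: "cz (Suc m) (\<lambda>xs. z' xs + t \<cdot>\<^sub>m hdiff m h xs)"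
      unfolding h_def t_def by (rule step_cz[OF z'(1-3) k])
    have c3: "vz (Suc k) (Suc m) (\<lambda>xs. z' xs + t \<cdot>\<^sub>m hdiff m h xs)"
      unfolding h_def t_def by (rule step_vz[OF z'(1-3) k])
    have c4: "cochain S4 m (\<lambda>xs. g xs + (- t) \<cdot>\<^sub>m h xs)" by (rule cochain_comb[OF z'(4) hc])
    have gc: "\<forall>ys\<in>tuples S4 m. g ys \<in> carrier_mat 3 3" and hcc: "\<forall>ys\<in>tuples S4 m. h ys \<in> carrier_mat 3 3"
      and zc': "\<forall>ys\<in>tuples S4 (Suc m). z' ys \<in> carrier_mat 3 3"
      using z'(4) hc z'(1) by (auto simp: cochain_iff)
    have c5: "\<forall>xs\<in>tuples S4 (Suc m). \<forall>c<6. kap c (z xs) = kap c (z' xs + t \<cdot>\<^sub>m hdiff m h xs) + kap c (hdiff m (\<lambda>xs. g xs + (- t) \<cdot>\<^sub>m h xs) xs)"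
    proof (intro ballI allI impI)
      fix xs :: "'r mat list" and c :: nat assume xs: "xs \<in> tuples S4 (Suc m)" and c: "c < 6"
      have "kap c (hdiff m (\<lambda>xs. g xs + (- t) \<cdot>\<^sub>m h xs) xs) = kap c (hdiff m g xs) + (- t) * kap c (hdiff m h xs)"
        by (rule hdiff_lin[OF gc hcc xs c])
      moreover have "kap c (z' xs + t \<cdot>\<^sub>m hdiff m h xs) = kap c (z' xs) + t * kap c (hdiff m h xs)"
        using zc' xs by (simp add: kap_add kap_smult)
      ultimately show "kap c (z xs) = kap c (z' xs + t \<cdot>\<^sub>m hdiff m h xs) + kap c (hdiff m (\<lambda>xs. g xs + (- t) \<cdot>\<^sub>m h xs) xs)"
        using E xs c by simp
    qed
    show ?case using c1 c2 c3 c4 c5 by blast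
  qed
  from this[of "Suc m"] show ?thesis by simp
qed


definition ev :: "bool \<Rightarrow> 'r::comm_ring_1 mat" where "ev b = (if b then ey else ex)"
definition lam :: "bool \<Rightarrow> 'r::comm_ring_1 mat \<Rightarrow> 'r" where "lam b a = (if b then a$$(0,2) else a$$(0,1))"

definition PF :: "nat \<Rightarrow> (bool list \<Rightarrow> 'r::comm_ring_1 mat) \<Rightarrow> 'r mat list \<Rightarrow> 'r mat" where
  "PF n F xs = mat 3 3 (\<lambda>(p,q). \<Sum>w\<in>{w. length w = n}. (\<Prod>i<n. lam (w!i) (xs!i)) * F w $$ (p,q))"

lemma finite_words: "finite {w::bool list. length w = n}"
  using finite_lists_length_eq[of "UNIV::bool set" n] by simp

lemma ev_S4[simp]: "ev b \<in> S4" by (simp add: ev_def)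
lemma ev_idx[simp]: "ev b $$ (0,0) = 0" "ev b $$ (0,1) = (if b then 0 else 1)" "ev b $$ (0,2) = (if b then 1 else 0)"
  "ev b $$ (0,Suc 0) = (if b then 0 else 1)"
  by (simp_all add: ev_def ex_def ey_def)

lemma lam_ev: "lam b (ev c) = (if b = c then 1 else 0)"
  by (simp add: lam_def ev_def ex_def ey_def)
lemma lam_one: "lam b (1\<^sub>m 3) = 0"
  by (simp add: lam_def)
lemma lam_lin: "x \<in> carrier_mat 3 3 \<Longrightarrow> y \<in> carrier_mat 3 3 \<Longrightarrow> lam b (r \<cdot>\<^sub>m x + s \<cdot>\<^sub>m y) = r * lam b x + s * lam b y"
  by (simp add: lam_def)

lemma PF_carrier[simp]: "PF n F xs \<in> carrier_mat 3 3"
  by (simp add: PF_def)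
lemma PF_dim[simp]: "dim_row (PF n F xs) = 3" "dim_col (PF n F xs) = 3"
  by (simp_all add: PF_def)

lemma prod_upd:
  assumes "k < n" "k < length xs"
  shows "(\<Prod>i<n. f i ((xs[k:=v])!i)) = f k v * (\<Prod>i\<in>{..<n}-{k}. f i (xs!i))"
proof -
  have "(\<Prod>i<n. f i ((xs[k:=v])!i)) = f k ((xs[k:=v])!k) * (\<Prod>i\<in>{..<n}-{k}. f i ((xs[k:=v])!i))"
    by (rule prod.remove) (use assms in auto)
  also have "(\<Prod>i\<in>{..<n}-{k}. f i ((xs[k:=v])!i)) = (\<Prod>i\<in>{..<n}-{k}. f i (xs!i))"
    by (rule prod.cong) auto
  finally show ?thesis using assms by simp
qed

lemma PF_lin:
  assumes xs: "xs \<in> tuples (S4::'r::comm_ring_1 mat set) n" and k: "k < n" and x: "x \<in> S4" and y: "y \<in> S4"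
  shows "PF n F (xs[k := r \<cdot>\<^sub>m x + s \<cdot>\<^sub>m y]) = r \<cdot>\<^sub>m PF n F (xs[k:=x]) + s \<cdot>\<^sub>m PF n F (xs[k:=y])"
proof (rule eq_matI)
  fix p q assume "p < dim_row (r \<cdot>\<^sub>m PF n F (xs[k:=x]) + s \<cdot>\<^sub>m PF n F (xs[k:=y]))" "q < dim_col (r \<cdot>\<^sub>m PF n F (xs[k:=x]) + s \<cdot>\<^sub>m PF n F (xs[k:=y]))"
  then have pq: "p < 3" "q < 3" by auto
  have len: "k < length xs" using tuples_len[OF xs] k by simp
  have xc: "x \<in> carrier_mat 3 3" "y \<in> carrier_mat 3 3" using x y S4_carrier by auto
  have P: "\<And>v. (\<Prod>i<n. lam (w!i) ((xs[k:=v])!i)) = lam (w!k) v * (\<Prod>i\<in>{..<n}-{k}. lam (w!i) (xs!i))" for w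
    using prod_upd[OF k len, where f="\<lambda>i. lam (w!i)"] by simp
  show "PF n F (xs[k := r \<cdot>\<^sub>m x + s \<cdot>\<^sub>m y]) $$ (p, q) = (r \<cdot>\<^sub>m PF n F (xs[k:=x]) + s \<cdot>\<^sub>m PF n F (xs[k:=y])) $$ (p, q)"
    using pq by (simp add: PF_def P lam_lin[OF xc] sum_distrib_left sum.distrib algebra_simps)
qed auto

lemma PF_cochain: "cochain (S4::'r::comm_ring_1 mat set) n (PF n F)"
  unfolding cochain_iff
proof
  show "\<forall>xs\<in>tuples S4 n. PF n F xs \<in> carrier_mat 3 3" by simp
  show "mlin n (\<lambda>xs c. kap c (PF n F xs))" unfolding mlin_def
    by (auto simp: PF_lin kap_add kap_smult)
qed

lemma PF_one:
  assumes "j < n" "xs!j = 1\<^sub>m 3"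
  shows "PF n F xs = (0\<^sub>m 3 3 :: 'r::comm_ring_1 mat)"
proof -
  have "(\<Prod>i<n. lam (w!i) (xs!i)) = 0" for w
    using assms by (intro prod_zero) (auto simp: lam_one intro!: bexI[of _ j])
  then show ?thesis by (intro eq_matI) (auto simp: PF_def)
qed

lemma PF_vz: "vz K n (PF n F :: 'r::comm_ring_1 mat list \<Rightarrow> 'r mat)"
  unfolding vz_def using PF_one by fastforce

lemma PF_word:
  assumes u: "length u = n" and F: "F u \<in> carrier_mat 3 3"
  shows "PF n F (map ev u) = (F u :: 'r::comm_ring_1 mat)"
proof -
  have P: "(\<Prod>i<n. lam (w!i) (map ev u ! i)) = (if w = u then 1 else (0::'r))" if w: "length w = n" for w
  proof (cases "w = u")
    case True then show ?thesis using u by (simp add: lam_ev)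
  next
    case False
    from False w u have "\<exists>j<n. w!j \<noteq> u!j" by (auto simp: list_eq_iff_nth_eq)
    then obtain j where j: "j < n" "w!j \<noteq> u!j" by blast
    have "(\<Prod>i<n. lam (w!i) (map ev u ! i)) = (0::'r)"
      using j u by (intro prod_zero) (auto simp: lam_ev intro!: bexI[of _ j])
    then show ?thesis using False by simp
  qed
  show ?thesis
  proof (rule eq_matI)
    fix p q assume "p < dim_row (F u)" "q < dim_col (F u)"
    then have pq: "p < 3" "q < 3" using F by auto
    have "PF n F (map ev u) $$ (p,q) = (\<Sum>w\<in>{w. length w = n}. (\<Prod>i<n. lam (w!i) (map ev u ! i)) * F w $$ (p,q))"
      using pq by (simp add: PF_def)
    also have "\<dots> = (\<Sum>w\<in>{w. length w = n}. (if w = u then F w $$ (p,q) else 0))"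
      by (rule sum.cong) (auto simp: P)
    also have "\<dots> = F u $$ (p,q)" using u finite_words by (simp add: sum.delta)
    finally show "PF n F (map ev u) $$ (p,q) = F u $$ (p,q)" .
  qed (use F in auto)
qed

lemma ev_mult: "ev a * ev b = (0\<^sub>m 3 3 :: 'r::comm_ring_1 mat)"
proof -
  have "ev a * ev b = S4_mat (0::'r) 0 0"
    by (cases a; cases b) (simp_all add: ev_def ex_def ey_def S4_mult)
  also have "\<dots> = 0\<^sub>m 3 3" by (rule mat3_eqI) auto
  finally show ?thesis .
qed

lemma cochain_zero_entry:
  assumes g: "cochain (S4::'r::comm_ring_1 mat set) m g" and ys: "ys \<in> tuples S4 m" and i: "i < m" "ys!i = 0\<^sub>m 3 3" and c: "c < 6"
  shows "kap c (g ys) = 0"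
proof -
  have gl: "mlin m (\<lambda>xs c. kap c (g xs))" using g by (simp add: cochain_iff)
  have "kap c (g (ys[i := 0 \<cdot>\<^sub>m 0\<^sub>m 3 3 + 0 \<cdot>\<^sub>m 0\<^sub>m 3 3])) = 0 * kap c (g (ys[i:=0\<^sub>m 3 3])) + 0 * kap c (g (ys[i:=0\<^sub>m 3 3]))"
    using gl ys i c S4_zero unfolding mlin_def by blast
  moreover have "ys[i := 0 \<cdot>\<^sub>m 0\<^sub>m 3 3 + 0 \<cdot>\<^sub>m 0\<^sub>m 3 3] = ys" using i list_update_id[of ys i] by simp
  ultimately show ?thesis by simp
qed

lemma Lop_ev: "Lop (ev b) c k = (if c = 5 then (if b then k 1 else k 0) else 0)"
  by (simp add: Lop_def)
lemma Rop_ev: "Rop (ev b) c k = (if c = 2 then (if b then k 0 else 0) else if c = 3 then (if b then 0 else k 1)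
   else if c = 4 then (if b then - k 1 else k 0) else if c = 5 then (if b then - k 1 else 0) else 0)"
  by (simp add: Rop_def)

lemma dV:
  assumes g: "cochain (S4::'r::comm_ring_1 mat set) m g" and u: "length u = Suc m" and c: "c < 6"
  shows "kap c (hdiff m g (map ev u)) = Lop (ev (hd u)) c (\<lambda>d. kap d (g (map ev (tl u))))
           + (-1)^(Suc m) * Rop (ev (last u)) c (\<lambda>d. kap d (g (map ev (butlast u))))"
proof -
  have gc: "\<forall>ys\<in>tuples S4 m. g ys \<in> carrier_mat 3 3" using g by (simp add: cochain_iff)
  have U: "map ev u \<in> tuples S4 (Suc m)" using u by (auto simp: tuples_def)
  define A where "A i = kap c (face m i g (map ev u))" for i
  have Z: "A i = 0" if "i \<noteq> 0" "i \<le> m" for i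
  proof -
    have im: "i - 1 < m" using that by linarith
    have t: "mrg (i-1) (map ev u) \<in> tuples S4 m" using tuples_mrg[OF U im] .
    have "mrg (i-1) (map ev u) ! (i-1) = 0\<^sub>m 3 3" using that u by (simp add: nth_mrg ev_mult)
    then show ?thesis unfolding A_def using that im cochain_zero_entry[OF g t im _ c] by (simp add: face_def)
  qed
  have "(\<Sum>i\<le>Suc m. (-1)^i * A i) = (\<Sum>i\<in>{0, Suc m}. (-1)^i * A i)"
    by (rule sum.mono_neutral_right) (use Z in auto)
  also have "\<dots> = A 0 + (-1)^(Suc m) * A (Suc m)" by simp
  finally have S: "kap c (hdiff m g (map ev u)) = A 0 + (-1)^(Suc m) * A (Suc m)"
    unfolding A_def kap_hdiff .
  have d: "drop 1 (map ev u) = map ev (tl u)" by (cases u) auto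
  have tk: "take m (map ev u) = map ev (butlast u)" using u by (simp add: take_map butlast_conv_take)
  have h0: "map ev u ! 0 = ev (hd u)" using u by (cases u) auto
  have lu: "last u = u!m" using u by (subst last_conv_nth) auto
  have hl: "map ev u ! m = ev (last u)" using u lu by simp
  have t1: "map ev (tl u) \<in> tuples S4 m" using u by (auto simp: tuples_def)
  have t2: "map ev (butlast u) \<in> tuples S4 m" using u by (auto simp: tuples_def)
  have F0: "face m 0 g (map ev u) = ev (hd u) * g (map ev (tl u))"
    unfolding face_def h0 d by simp
  have F1: "face m (Suc m) g (map ev u) = g (map ev (butlast u)) * ev (last u)"
    unfolding face_def tk hl by simp
  have "A 0 = Lop (ev (hd u)) c (\<lambda>d. kap d (g (map ev (tl u))))"
    unfolding A_def F0 by (rule kap_Lmult[OF ev_S4 _ c]) (use gc t1 in blast)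
  moreover have "A (Suc m) = Rop (ev (last u)) c (\<lambda>d. kap d (g (map ev (butlast u))))"
    unfolding A_def F1 by (rule kap_Rmult[OF ev_S4 _ c]) (use gc t2 in blast)
  ultimately show ?thesis using S by simp
qed


definition Eij :: "nat \<Rightarrow> nat \<Rightarrow> 'r::comm_ring_1 mat" where "Eij a b = mat 3 3 (\<lambda>(p,q). if p = a \<and> q = b then 1 else 0)"

lemma Eij_carrier[simp]: "Eij a b \<in> carrier_mat 3 3" by (simp add: Eij_def)

lemma kap_E: "c < 6 \<Longrightarrow> kap c (Eij 0 0 :: 'r::comm_ring_1 mat) = (if c = 5 then 1 else 0)"
  "c < 6 \<Longrightarrow> kap c (Eij 1 1 :: 'r::comm_ring_1 mat) = (if c = 4 then 1 else 0)"
  "c < 6 \<Longrightarrow> kap c (Eij 1 2 :: 'r::comm_ring_1 mat) = (if c = 2 then 1 else 0)"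
  "c < 6 \<Longrightarrow> kap c (Eij 2 1 :: 'r::comm_ring_1 mat) = (if c = 3 then 1 else 0)"
  by (auto simp: kap_def Eij_def dest!: less6_cases)

definition Et :: "nat \<Rightarrow> bool list \<Rightarrow> 'r::comm_ring_1 mat" where
  "Et t u = (if t = 0 then Eij 1 1 else if t = 1 then Eij 0 0 else if last u then Eij 2 1 else Eij 1 2)"

lemma Et_carrier[simp]: "Et t u \<in> carrier_mat 3 3" by (simp add: Et_def)

lemma kap_Et: "c < 6 \<Longrightarrow> kap c (Et t u :: 'r::comm_ring_1 mat) = (if t = 0 then (if c = 4 then 1 else 0) else if t = 1 then (if c = 5 then 1 else 0)
   else if last u then (if c = 3 then 1 else 0) else (if c = 2 then 1 else 0))"
  by (auto simp: Et_def kap_def Eij_def dest!: less6_cases)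

definition Gm :: "'r \<Rightarrow> 'r \<Rightarrow> 'r::comm_ring_1 mat" where
  "Gm a b = mat 3 3 (\<lambda>(p,q). if p = 1 \<and> q = 0 then a else if p = 2 \<and> q = 0 then b else 0)"

lemma Gm_carrier[simp]: "Gm a b \<in> carrier_mat 3 3" by (simp add: Gm_def)
lemma kap_Gm: "c < 6 \<Longrightarrow> kap c (Gm a b) = (if c = 0 then a else if c = 1 then b else 0)"
  by (auto simp: kap_def Gm_def dest!: less6_cases)

definition psi :: "nat \<Rightarrow> 'r::comm_ring_1 \<Rightarrow> (nat \<Rightarrow> bool list \<Rightarrow> 'r) \<Rightarrow> bool list \<Rightarrow> 'r" where
  "psi t sg K w = (if t = 0 then K 4 w - (if last w then - K 3 (butlast w @ [False]) else K 2 (butlast w @ [True]))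
     else if t = 1 then K 5 w - (sg * (if hd w then K 3 (tl w @ [False]) else K 2 (tl w @ [True])) - (if last w then K 3 (butlast w @ [False]) else 0))
     else (if last w then K 3 w else K 2 w))"

lemma psi_cong:
  assumes "\<And>c v. c < 6 \<Longrightarrow> length v = length w \<Longrightarrow> K1 c v = K2 c v" "w \<noteq> []"
  shows "psi t sg K1 w = psi t sg K2 w"
  using assms by (simp add: psi_def)

lemma last_word: "w \<noteq> [] \<Longrightarrow> last w \<Longrightarrow> butlast w @ [True] = w"
  "w \<noteq> [] \<Longrightarrow> \<not> last w \<Longrightarrow> butlast w @ [False] = w"
  by (metis append_butlast_last_id)+

lemma psi_KF:
  fixes Kg :: "nat \<Rightarrow> bool list \<Rightarrow> 'r::comm_ring_1"
  assumes sg: "sg * sg = 1" and t: "t < 3" and w: "w \<noteq> []"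
  shows "psi t sg (\<lambda>c v. Lop (ev (hd v)) c (\<lambda>d. Kg d (tl v)) + sg * Rop (ev (last v)) c (\<lambda>d. Kg d (butlast v))) w = 0"
proof -
  have s: "\<And>x. sg * (sg * x) = x" using sg by (simp add: mult.assoc[symmetric])
  show ?thesis using t w by (auto simp: psi_def Lop_ev Rop_ev s algebra_simps)
qed

lemma span_alg:
  fixes K :: "nat \<Rightarrow> bool list \<Rightarrow> 'r::comm_ring_1"
  assumes sg: "sg * sg = 1" and w: "w \<noteq> []" and K0: "K 0 w = 0" "K 1 w = 0" and c: "c < 6"
  shows "K c w - (\<Sum>t<3. psi t sg K w * kap c (Et t w))
    - (Lop (ev (hd w)) c (\<lambda>d. kap d (Gm (sg * K 2 (tl w @ [True])) (sg * K 3 (tl w @ [False]))))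
       + sg * Rop (ev (last w)) c (\<lambda>d. kap d (Gm (sg * K 2 (butlast w @ [True])) (sg * K 3 (butlast w @ [False]))))) = 0"
proof -
  have s: "\<And>x. sg * (sg * x) = x" using sg by (simp add: mult.assoc[symmetric])
  have L: "Lop (ev b) c (\<lambda>d. kap d (Gm x y)) = (if c = 5 then (if b then y else x) else 0)" for b x y
    by (simp add: Lop_ev kap_Gm)
  have R: "Rop (ev b) c (\<lambda>d. kap d (Gm x y)) = (if c = 2 then (if b then x else 0) else if c = 3 then (if b then 0 else y)
   else if c = 4 then (if b then - y else x) else if c = 5 then (if b then - y else 0) else 0)" for b x y
    by (simp add: Rop_ev kap_Gm)
  have sum3: "(\<Sum>t::nat<3. f t) = f 0 + f 1 + (f 2 :: 'r)" for f by (simp add: numeral_3_eq_3 numeral_2_eq_2)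
  show ?thesis
    unfolding L R sum3 using c K0 last_word[OF w]
    by (cases "last w"; cases "hd w") (auto simp: psi_def kap_Et s algebra_simps dest!: less6_cases)
qed

lemma kap_lincomb: "c < 6 \<Longrightarrow> kap c (lincomb K r cc xs) = (\<Sum>l<K. r l * kap c (cc l xs))"
  by (auto simp: kap_def lincomb_def sum_subtractf[symmetric] right_diff_distrib dest!: less6_cases)

lemma lincomb_carrier[simp]: "lincomb K r cc xs \<in> carrier_mat 3 3"
  by (simp add: lincomb_def)

lemma lincomb_cochain:
  assumes "\<And>l. l < K \<Longrightarrow> cochain (S4::'r::comm_ring_1 mat set) n (cc l)"
  shows "cochain S4 n (lincomb K r cc)"
  unfolding cochain_iff
proof
  show "\<forall>xs\<in>tuples S4 n. lincomb K r cc xs \<in> carrier_mat 3 3" by simp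
  have "mlin n (\<lambda>xs c. \<Sum>l\<in>{..<K}. r l * kap c (cc l xs))"
    by (rule mlin_sum) (use assms in \<open>auto simp: cochain_iff\<close>)
  then show "mlin n (\<lambda>xs c. kap c (lincomb K r cc xs))"
    by (rule mlin_cong) (simp add: kap_lincomb)
qed

lemma cocycle_iff: "cocycle (S4::'r::comm_ring_1 mat set) n f \<longleftrightarrow> cochain S4 n f \<and> cz n f"
  by (simp add: cocycle_def cz_def S4_kap)

lemma mlin_hdiff: "cochain (S4::'r::comm_ring_1 mat set) n f \<Longrightarrow> mlin (Suc n) (\<lambda>xs c. kap c (hdiff n f xs))"
  using hdiff_cochain by (simp add: cochain_iff)

lemma basis_cases:
  assumes xs: "xs \<in> tuples (S4::'r::comm_ring_1 mat set) n" and B: "set xs \<subseteq> Bs"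
  obtains j where "j < n" "xs!j = 1\<^sub>m 3" | w where "length w = n" "xs = map ev w"
proof (cases "1\<^sub>m 3 \<in> set xs")
  case True
  then obtain j where "j < length xs" "xs!j = 1\<^sub>m 3" by (auto simp: in_set_conv_nth)
  then show ?thesis using that tuples_len[OF xs] by auto
next
  case False
  have neq: "ex \<noteq> (ey :: 'r mat)"
  proof
    assume "ex = (ey :: 'r mat)"
    then have "ex $$ (0,1) = (ey :: 'r mat) $$ (0,1)" by simp
    then show False by (simp add: ex_def ey_def)
  qed
  have E: "\<forall>x\<in>set xs. x = ex \<or> x = ey" using False B by (auto simp: Bs_def)
  have "xs = map ev (map (\<lambda>x. x = ey) xs)"
    using E neq by (auto simp: ev_def intro!: nth_equalityI dest: nth_mem)
  then show ?thesis using that tuples_len[OF xs] by (metis length_map)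
qed

lemma sum_add_ivl: "(\<Sum>l<(p::nat) + q. f l) = (\<Sum>l<p. f l) + (\<Sum>i<q. (f (p + i)::'a::comm_monoid_add))"
  by (induction q) (simp_all add: add.assoc)

lemma sum_blocks: "(\<Sum>l<(a::nat) * N. f l) = (\<Sum>t<a. \<Sum>i<N. (f (t * N + i) :: 'a::comm_monoid_add))"
proof (induction a)
  case 0 then show ?case by simp
next
  case (Suc a)
  have "(\<Sum>l<Suc a * N. f l) = (\<Sum>l<a * N + N. f l)" by (simp add: add.commute)
  also have "\<dots> = (\<Sum>l<a * N. f l) + (\<Sum>i<N. f (a * N + i))" by (rule sum_add_ivl)
  finally show ?case using Suc by simp
qed


lemma neg1_cancel: "(-1::'r::comm_ring_1)^x * y = 0 \<Longrightarrow> y = 0"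
proof -
  assume h: "(-1::'r)^x * y = 0"
  have "y = ((-1::'r)^x * (-1)^x) * y" by (simp add: power_mult_distrib[symmetric])
  also have "\<dots> = (-1)^x * ((-1)^x * y)" by (simp add: mult.assoc)
  finally show "y = 0" using h by simp
qed

lemma HHs: "HH_free_of_rank (S4::'r::comm_ring_1 mat set) (Suc m) (3 * 2^(Suc m))"
proof -
  define N :: nat where "N = 2^(Suc m)"
  define W where "W = {w::bool list. length w = Suc m}"
  have finW: "finite W" using finite_words W_def by simp
  have cardW: "card W = N"
  proof -
    have "W = {xs. set xs \<subseteq> (UNIV::bool set) \<and> length xs = Suc m}" unfolding W_def by simp
    then show ?thesis unfolding N_def using card_lists_length_eq[of "UNIV::bool set" "Suc m"] by simp
  qed
  obtain enc where enc: "bij_betw enc W {0..<N}" using ex_bij_betw_finite_nat[OF finW] cardW by auto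
  define dec where "dec = inv_into W enc"
  have encW: "\<And>w. w \<in> W \<Longrightarrow> enc w < N" using enc by (auto dest: bij_betwE)
  have decenc: "\<And>w. w \<in> W \<Longrightarrow> dec (enc w) = w" using bij_betw_inv_into_left[OF enc] dec_def by simp
  have decW: "\<And>i. i < N \<Longrightarrow> dec i \<in> W" using bij_betw_inv_into[OF enc] dec_def by (auto dest: bij_betwE)
  have encdec: "\<And>i. i < N \<Longrightarrow> enc (dec i) = i" using bij_betw_inv_into_right[OF enc] dec_def by simp
  have Npos: "0 < N" unfolding N_def by simp
  define sg :: 'r where "sg = (-1)^(Suc m)"
  have sg: "sg * sg = 1" unfolding sg_def by (simp add: power_mult_distrib[symmetric])
  define Cf where "Cf l u = (if u = dec (l mod N) then Et (l div N) u else (0\<^sub>m 3 3 :: 'r mat))" for l u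
  define cc where "cc l = PF (Suc m) (Cf l)" for l
  have Cfc: "\<And>l u. Cf l u \<in> carrier_mat 3 3" unfolding Cf_def by simp
  have cc_word: "\<And>l w. w \<in> W \<Longrightarrow> cc l (map ev w) = Cf l w"
    unfolding cc_def W_def using PF_word Cfc by blast
  have divmod: "\<And>t i. i < N \<Longrightarrow> (t * N + i) div N = t \<and> (t * N + i) mod N = i"
    using Npos by simp
  have lin_word: "kap c (lincomb (3*N) r cc (map ev w)) = (\<Sum>t<3. r (t*N + enc w) * kap c (Et t w))"
    if w: "w \<in> W" and c: "c < 6" for w c r
  proof -
    have "kap c (lincomb (3*N) r cc (map ev w)) = (\<Sum>l<3*N. (if dec (l mod N) = w then r l * kap c (Et (l div N) w) else 0))"
      using c w by (simp add: kap_lincomb cc_word, intro sum.cong) (auto simp: Cf_def)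
    also have "\<dots> = (\<Sum>t<3. \<Sum>i<N. (if dec i = w then r (t*N+i) * kap c (Et t w) else 0))"
      unfolding sum_blocks by (intro sum.cong refl) (auto simp: divmod)
    also have "\<dots> = (\<Sum>t<3. r (t*N + enc w) * kap c (Et t w))"
    proof (rule sum.cong[OF refl])
      fix t
      have "(\<Sum>i<N. (if dec i = w then r (t*N+i) * kap c (Et t w) else 0)) = (\<Sum>i<N. (if i = enc w then r (t*N+i) * kap c (Et t w) else 0))"
        by (rule sum.cong[OF refl]) (use w decenc encdec in force)
      also have "\<dots> = r (t*N + enc w) * kap c (Et t w)" using encW[OF w] by (simp add: sum.delta)
      finally show "(\<Sum>i<N. (if dec i = w then r (t*N+i) * kap c (Et t w) else 0)) = r (t*N + enc w) * kap c (Et t w)" .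
    qed
    finally show ?thesis .
  qed
  have cc_cochain: "\<And>l. cochain S4 (Suc m) (cc l)" unfolding cc_def by (rule PF_cochain)
  have cc_c: "\<And>l. \<forall>ys\<in>tuples S4 (Suc m). cc l ys \<in> carrier_mat 3 3" unfolding cc_def by simp
  have cc_vz: "\<And>l K. vz K (Suc m) (cc l)" unfolding cc_def by (rule PF_vz)
  have cc_one: "\<And>l xs j. j < Suc m \<Longrightarrow> xs!j = 1\<^sub>m 3 \<Longrightarrow> cc l xs = 0\<^sub>m 3 3" unfolding cc_def by (rule PF_one)
  have cc_k01: "\<And>l w d. w \<in> W \<Longrightarrow> d < 2 \<Longrightarrow> kap d (cc l (map ev w)) = 0"
    by (auto simp: cc_word Cf_def kap_Et)
  have W_len: "\<And>w. w \<in> W \<longleftrightarrow> length w = Suc m" unfolding W_def by simp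
  show ?thesis unfolding HH_free_of_rank_def N_def[symmetric]
  proof (intro exI[of _ cc] conjI allI impI)
    fix l assume "l < 3 * N"
    show "cocycle S4 (Suc m) (cc l)" unfolding cocycle_iff cz_def
    proof (intro conjI ballI allI impI)
      show "cochain S4 (Suc m) (cc l)" by (rule cc_cochain)
      fix xs :: "'r mat list" and c :: nat assume xs: "xs \<in> tuples S4 (Suc (Suc m))" and c: "c < 6"
      show "kap c (hdiff (Suc m) (cc l) xs) = 0"
      proof (rule mlin_basis[OF mlin_hdiff[OF cc_cochain] _ xs c])
        fix ys :: "'r mat list" and d :: nat assume ys: "ys \<in> tuples S4 (Suc (Suc m))" and B: "set ys \<subseteq> Bs" and d: "d < 6"
        from basis_cases[OF ys B] show "kap d (hdiff (Suc m) (cc l) ys) = 0"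
        proof cases
          case (1 j)
          show ?thesis by (rule vanish_d[OF cc_c cc_vz _ ys 1(1) 1(2) d]) simp
        next
          case (2 u)
          have tl: "tl u \<in> W" "butlast u \<in> W" using 2 W_len by auto
          show ?thesis unfolding 2(2) dV[OF cc_cochain 2(1) d]
            using cc_k01[OF tl(1)] cc_k01[OF tl(2)] by (simp add: Lop_ev Rop_ev)
        qed
      qed
    qed
  next
    fix z :: "'r mat list \<Rightarrow> 'r mat" assume zc: "cocycle S4 (Suc m) z"
    then have z: "cochain S4 (Suc m) z" and zcz: "cz (Suc m) z" by (auto simp: cocycle_iff)
    obtain z' g1 where z': "cochain S4 (Suc m) z'" "cz (Suc m) z'" "vz (Suc m) (Suc m) z'" "cochain S4 m g1"
      and zE: "\<forall>xs\<in>tuples S4 (Suc m). \<forall>c<6. kap c (z xs) = kap c (z' xs) + kap c (hdiff m g1 xs)"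
      using normalize[OF z zcz] by blast
    define KN where "KN c u = kap c (z' (map ev u))" for c u
    have KN01: "KN 0 u = 0 \<and> KN 1 u = 0" if u: "u \<in> W" for u
    proof -
      have t1: "map ev (u @ [True]) \<in> tuples S4 (Suc (Suc m))" "map ev (u @ [False]) \<in> tuples S4 (Suc (Suc m))"
        using u W_len by (auto simp: tuples_def)
      have l1: "length (u @ [True]) = Suc (Suc m)" "length (u @ [False]) = Suc (Suc m)" using u W_len by auto
      have A1: "\<forall>c<6. kap c (hdiff (Suc m) z' (map ev (u @ [True]))) = 0" using z'(2) t1(1) unfolding cz_def by blast
      have A2: "\<forall>c<6. kap c (hdiff (Suc m) z' (map ev (u @ [False]))) = 0" using z'(2) t1(2) unfolding cz_def by blast
      have D1: "kap 2 (hdiff (Suc m) z' (map ev (u @ [True]))) = (-1)^(Suc (Suc m)) * KN 0 u"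
        using dV[OF z'(1) l1(1), of 2] unfolding KN_def by (simp add: Lop_ev Rop_ev)
      have D2: "kap 3 (hdiff (Suc m) z' (map ev (u @ [False]))) = (-1)^(Suc (Suc m)) * KN 1 u"
        using dV[OF z'(1) l1(2), of 3] unfolding KN_def by (simp add: Lop_ev Rop_ev)
      have "(-1)^(Suc (Suc m)) * KN 0 u = 0" using A1[rule_format, of 2] D1 by simp
      moreover have "(-1)^(Suc (Suc m)) * KN 1 u = 0" using A2[rule_format, of 3] D2 by simp
      ultimately show ?thesis using neg1_cancel by blast
    qed
    define r where "r l = psi (l div N) sg KN (dec (l mod N))" for l
    define G where "G v = Gm (sg * KN 2 (v @ [True])) (sg * KN 3 (v @ [False]))" for v
    define g2 where "g2 = PF m G"
    define g where "g xs = g1 xs + 1 \<cdot>\<^sub>m g2 xs" for xs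
    have g2c: "cochain S4 m g2" unfolding g2_def by (rule PF_cochain)
    have gc: "cochain S4 m g" unfolding g_def by (rule cochain_comb[OF z'(4) g2c])
    have g1cc: "\<forall>ys\<in>tuples S4 m. g1 ys \<in> carrier_mat 3 3" using z'(4) by (simp add: cochain_iff)
    have g2cc: "\<forall>ys\<in>tuples S4 m. g2 ys \<in> carrier_mat 3 3" unfolding g2_def by simp
    have zcc: "\<forall>ys\<in>tuples S4 (Suc m). z ys \<in> carrier_mat 3 3" using z by (simp add: cochain_iff)
    have z'cc: "\<forall>ys\<in>tuples S4 (Suc m). z' ys \<in> carrier_mat 3 3" using z'(1) by (simp add: cochain_iff)
    define Phi where "Phi xs c = kap c (z' xs) - kap c (lincomb (3*N) r cc xs) - kap c (hdiff m g2 xs)" for xs c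
    have Phi0: "Phi xs c = 0" if xs: "xs \<in> tuples S4 (Suc m)" and c: "c < 6" for xs c
    proof (rule mlin_basis[OF _ _ xs c])
      have m1: "mlin (Suc m) (\<lambda>xs c. kap c (z' xs) + (-1) * kap c (lincomb (3*N) r cc xs))"
        by (rule mlin_add) (use z'(1) lincomb_cochain[OF cc_cochain] in \<open>auto simp: cochain_iff\<close>)
      have "mlin (Suc m) (\<lambda>xs c. (kap c (z' xs) + (-1) * kap c (lincomb (3*N) r cc xs)) + (-1) * kap c (hdiff m g2 xs))"
        by (rule mlin_add[OF m1 mlin_hdiff[OF g2c]])
      then show "mlin (Suc m) Phi" by (rule mlin_cong) (simp add: Phi_def)
    next
      fix ys :: "'r mat list" and d :: nat assume ys: "ys \<in> tuples S4 (Suc m)" and B: "set ys \<subseteq> Bs" and d: "d < 6"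
      from basis_cases[OF ys B] show "Phi ys d = 0"
      proof cases
        case (1 j)
        have a: "kap d (z' ys) = 0" using z'(3) ys 1 d unfolding vz_def by blast
        have b: "kap d (lincomb (3*N) r cc ys) = 0" using d cc_one[OF 1] by (simp add: kap_lincomb)
        have e: "kap d (hdiff m g2 ys) = 0"
          unfolding g2_def by (rule vanish_d[OF _ PF_vz _ ys 1(1) 1(2) d]) simp_all
        show ?thesis unfolding Phi_def using a b e by simp
      next
        case (2 w)
        have wW: "w \<in> W" using 2 W_len by simp
        have wne: "w \<noteq> []" using 2 by auto
        have tl: "length (tl w) = m" "length (butlast w) = m" using 2 by auto
        have a: "kap d (z' ys) = KN d w" unfolding KN_def 2(2) ..
        have b: "kap d (lincomb (3*N) r cc ys) = (\<Sum>t<3. psi t sg KN w * kap d (Et t w))"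
        proof -
          have "kap d (lincomb (3*N) r cc ys) = (\<Sum>t<3. r (t*N + enc w) * kap d (Et t w))"
            unfolding 2(2) by (rule lin_word[OF wW d])
          also have "\<dots> = (\<Sum>t<3. psi t sg KN w * kap d (Et t w))"
            using encW[OF wW] by (intro sum.cong[OF refl]) (simp add: r_def divmod[OF encW[OF wW]] decenc[OF wW])
          finally show ?thesis .
        qed
        have P1: "g2 (map ev (tl w)) = G (tl w)" unfolding g2_def by (rule PF_word[OF tl(1)]) (simp add: G_def)
        have P2: "g2 (map ev (butlast w)) = G (butlast w)" unfolding g2_def by (rule PF_word[OF tl(2)]) (simp add: G_def)
        have e: "kap d (hdiff m g2 ys) = Lop (ev (hd w)) d (\<lambda>d. kap d (G (tl w))) + sg * Rop (ev (last w)) d (\<lambda>d. kap d (G (butlast w)))"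
          unfolding 2(2) dV[OF g2c 2(1) d] P1 P2 sg_def by (rule refl)
        show ?thesis unfolding Phi_def a b e G_def
          using span_alg[OF sg wne _ _ d, of KN] KN01[OF wW] by simp
      qed
    qed
    show "\<exists>r. coboundary S4 (Suc m) (\<lambda>xs. z xs - lincomb (3 * N) r cc xs)"
    proof (intro exI[of _ r])
      show "coboundary S4 (Suc m) (\<lambda>xs. z xs - lincomb (3 * N) r cc xs)"
        unfolding coboundary_def
      proof (intro disjI2 exI[of _ m] exI[of _ g] conjI ballI)
        show "Suc m = Suc m" ..
        show "cochain S4 m g" by (rule gc)
        fix xs :: "'r mat list" assume xs: "xs \<in> tuples S4 (Suc m)"
        have zx: "z xs \<in> carrier_mat 3 3" using zcc xs by blast
        have car: "z xs - lincomb (3 * N) r cc xs - hdiff m g xs \<in> carrier_mat 3 3" by (rule minus_carrier_mat) simp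
        have "\<forall>c<6. kap c (z xs - lincomb (3 * N) r cc xs - hdiff m g xs) = 0"
        proof (intro allI impI)
          fix c :: nat assume c: "c < 6"
          have "kap c (z xs - lincomb (3 * N) r cc xs - hdiff m g xs) = kap c (z xs) - kap c (lincomb (3 * N) r cc xs) - kap c (hdiff m g xs)"
            using zx by (simp add: kap_minus[OF minus_carrier_mat[OF lincomb_carrier] hdiff_carrier] kap_minus[OF zx lincomb_carrier])
          also have "kap c (hdiff m g xs) = kap c (hdiff m g1 xs) + 1 * kap c (hdiff m g2 xs)"
            unfolding g_def by (rule hdiff_lin[OF g1cc g2cc xs c])
          also have "kap c (z xs) = kap c (z' xs) + kap c (hdiff m g1 xs)" using zE xs c by blast
          finally have "kap c (z xs - lincomb (3 * N) r cc xs - hdiff m g xs) = Phi xs c"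
            unfolding Phi_def by simp
          then show "kap c (z xs - lincomb (3 * N) r cc xs - hdiff m g xs) = 0" using Phi0[OF xs c] by simp
        qed
        then show "z xs - lincomb (3 * N) r cc xs - hdiff m g xs \<in> S4" using S4_kap[OF car] by simp
      qed
    qed
  next
    fix r :: "nat \<Rightarrow> 'r" assume cb: "coboundary S4 (Suc m) (lincomb (3 * N) r cc)"
    then obtain g where gc: "cochain S4 m g" and gE: "\<forall>xs\<in>tuples S4 (Suc m). lincomb (3 * N) r cc xs - hdiff m g xs \<in> S4"
      unfolding coboundary_def by auto
    define KL where "KL c v = kap c (lincomb (3*N) r cc (map ev v))" for c v
    define Kg where "Kg d q = kap d (g (map ev q))" for d q
    define KF where "KF c v = Lop (ev (hd v)) c (\<lambda>d. Kg d (tl v)) + sg * Rop (ev (last v)) c (\<lambda>d. Kg d (butlast v))" for c v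
    have KLF: "KL c v = KF c v" if c: "c < 6" and v: "length v = Suc m" for c v
    proof -
      have t: "map ev v \<in> tuples S4 (Suc m)" using v by (auto simp: tuples_def)
      have "lincomb (3 * N) r cc (map ev v) - hdiff m g (map ev v) \<in> S4" using gE t by blast
      then have "kap c (lincomb (3 * N) r cc (map ev v) - hdiff m g (map ev v)) = 0" using c
        by (subst (asm) S4_kap) auto
      then have "KL c v = kap c (hdiff m g (map ev v))" unfolding KL_def by (simp add: kap_minus)
      also have "\<dots> = KF c v" unfolding dV[OF gc v c] KF_def Kg_def sg_def ..
      finally show ?thesis .
    qed
    fix l assume l: "l < 3 * N"
    show "r l = 0"
    proof -
      define t where "t = l div N"
      define i where "i = l mod N"
      have t3: "t < 3" using l Npos unfolding t_def by (simp add: less_mult_imp_div_less)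
      have iN: "i < N" unfolding i_def using Npos by simp
      define w where "w = dec i"
      have wW: "w \<in> W" unfolding w_def using decW[OF iN] .
      have wl: "length w = Suc m" using wW W_len by simp
      have wne: "w \<noteq> []" using wl by auto
      have ew: "enc w = i" unfolding w_def using encdec[OF iN] .
      have lw: "l = t * N + enc w" unfolding ew t_def i_def by simp
      have "psi t sg KL w = psi t sg KF w" by (rule psi_cong[OF _ wne]) (use KLF wl in simp)
      also have "\<dots> = 0" unfolding KF_def by (rule psi_KF[OF sg t3 wne])
      finally have P0: "psi t sg KL w = 0" .
      have KLs: "KL c v = (\<Sum>t<3. r (t*N + enc v) * kap c (Et t v))" if "c < 6" "length v = Suc m" for c v
        unfolding KL_def by (rule lin_word) (use that W_len in auto)
      have sum3: "(\<Sum>t::nat<3. f t) = f 0 + f 1 + (f 2 :: 'r)" for f by (simp add: numeral_3_eq_3 numeral_2_eq_2)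
      have "psi t sg KL w = r (t*N + enc w)"
        using t3 wl wne by (auto simp: psi_def KLs sum3 kap_Et dest!: less3_cases)
      then show "r l = 0" using P0 lw by simp
    qed
  qed
qed


definition E0 :: "nat \<Rightarrow> 'r::comm_ring_1 mat" where
  "E0 l = (if l = 0 then Eij 0 0 else if l = 1 then Eij 1 1 else if l = 2 then Eij 1 2 else Eij 2 1)"

lemma E0_carrier[simp]: "E0 l \<in> carrier_mat 3 3" by (simp add: E0_def)

lemma kap_E0: "c < 6 \<Longrightarrow> kap c (E0 l :: 'r::comm_ring_1 mat) =
  (if l = 0 then (if c = 5 then 1 else 0) else if l = 1 then (if c = 4 then 1 else 0)
   else if l = 2 then (if c = 2 then 1 else 0) else (if c = 3 then 1 else 0))"
  by (auto simp: E0_def kap_def Eij_def dest!: less6_cases)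

lemma tuples1: "xs \<in> tuples A (Suc 0) \<longleftrightarrow> (\<exists>x\<in>A. xs = [x])"
  by (auto simp: tuples_def length_Suc_conv)

lemma hdiff0_kap:
  assumes "x \<in> S4" "f [] \<in> carrier_mat 3 3" "c < 6"
  shows "kap c (hdiff 0 f [x]) = Lop x c (\<lambda>d. kap d (f [])) - Rop x c (\<lambda>d. kap d (f ([]::'r::comm_ring_1 mat list)))"
proof -
  have "kap c (hdiff 0 f [x]) = kap c (face 0 0 f [x]) - kap c (face 0 1 f [x])"
    by (simp add: kap_hdiff)
  also have "face 0 0 f [x] = x * f []" by (simp add: face_def)
  also have "face 0 1 f [x] = f [] * x" by (simp add: face_def)
  finally show ?thesis using assms by (simp add: kap_Lmult kap_Rmult)
qed

lemma sum4: "(\<Sum>l::nat<4. f l) = f 0 + f 1 + f 2 + (f 3 :: 'a::comm_monoid_add)"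
  by (simp add: eval_nat_numeral)

lemma HH0: "HH_free_of_rank (S4::'r::comm_ring_1 mat set) 0 4"
  unfolding HH_free_of_rank_def
proof (intro exI[of _ "\<lambda>l _. E0 l"] conjI allI impI)
  fix l :: nat assume "l < 4"
  show "cocycle S4 0 (\<lambda>_. E0 l :: 'r mat)" unfolding cocycle_iff cz_def
  proof (intro conjI ballI allI impI)
    show "cochain S4 0 (\<lambda>_. E0 l :: 'r mat)" unfolding cochain_iff mlin_def by simp
    fix xs :: "'r mat list" and c :: nat assume xs: "xs \<in> tuples S4 (Suc 0)" and c: "c < 6"
    then obtain x where x: "x \<in> S4" "xs = [x]" by (auto simp: tuples1)
    show "kap c (hdiff 0 (\<lambda>_. E0 l) xs) = 0"
      unfolding x(2) hdiff0_kap[where f="\<lambda>_. E0 l", OF x(1) E0_carrier c] using c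
      by (simp add: Lop_def Rop_def kap_E0)
  qed
next
  fix z :: "'r mat list \<Rightarrow> 'r mat" assume "cocycle S4 0 z"
  then have z: "cochain S4 0 z" and zc: "cz 0 z" by (auto simp: cocycle_iff)
  have Zc: "z [] \<in> carrier_mat 3 3" using z by (auto simp: cochain_iff tuples_def)
  have ext: "[ex] \<in> tuples S4 (Suc 0)" by (simp add: tuples1)
  have h3: "kap 3 (hdiff 0 z [ex]) = 0" "kap 4 (hdiff 0 z [ex]) = 0" using zc ext unfolding cz_def by auto
  have K0: "kap 0 (z []) = 0" "kap 1 (z []) = 0"
    using h3 hdiff0_kap[where f=z, OF ex_S4 Zc, of 3] hdiff0_kap[where f=z, OF ex_S4 Zc, of 4] by (auto simp: Lop_def Rop_def ex_def)
  define r :: "nat \<Rightarrow> 'r" where "r l = (if l = 0 then kap 5 (z []) else if l = 1 then kap 4 (z []) else if l = 2 then kap 2 (z []) else kap 3 (z []))" for l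
  have "coboundary S4 0 (\<lambda>xs. z xs - lincomb 4 r (\<lambda>l _. E0 l) xs)"
  proof -
    have car: "z [] - lincomb 4 r (\<lambda>l _. E0 l) [] \<in> carrier_mat 3 3" by (rule minus_carrier_mat) simp
    have "\<forall>c<6. kap c (z [] - lincomb 4 r (\<lambda>l _. E0 l) []) = 0"
      using K0 Zc by (auto simp: kap_minus kap_lincomb sum4 kap_E0 r_def dest!: less6_cases)
    then show "coboundary S4 0 (\<lambda>xs. z xs - lincomb 4 r (\<lambda>l _. E0 l) xs)"
      unfolding coboundary_def using S4_kap[OF car] by simp
  qed
  then show "\<exists>r. coboundary S4 0 (\<lambda>xs. z xs - lincomb 4 r (\<lambda>l _. E0 l) xs)" by blast
next
  fix r :: "nat \<Rightarrow> 'r" and l :: nat assume cb: "coboundary S4 0 (lincomb 4 r (\<lambda>l _. E0 l))" and l: "l < 4"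
  then have "lincomb 4 r (\<lambda>l _. E0 l) [] \<in> S4" unfolding coboundary_def by auto
  then have "\<forall>c<6. kap c (lincomb 4 r (\<lambda>l _. E0 l) []) = 0" by (simp add: S4_kap)
  then have "r 0 = 0 \<and> r 1 = 0 \<and> r 2 = 0 \<and> r 3 = 0"
    by (auto simp: kap_lincomb sum4 kap_E0 dest: spec[of _ 5] spec[of _ 4] spec[of _ 2] spec[of _ 3])
  then show "r l = 0" using l by (auto simp: eval_nat_numeral less_Suc_eq)
qed

theorem theorem5p6:
  shows "\<forall>n. HH_free_of_rank (S4 :: 'r::comm_ring_1 mat set) n (if n = 0 then 4 else 3 * 2 ^ n)"
proof
  fix n :: nat
  show "HH_free_of_rank (S4 :: 'r::comm_ring_1 mat set) n (if n = 0 then 4 else 3 * 2 ^ n)"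
  proof (cases n)
    case 0 then show ?thesis using HH0 by simp
  next
    case (Suc m) then show ?thesis using HHs[of m] by simp
  qed
qed


end
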